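(* Let $\mu<0$, $k=e^{-\mu}>1$, $g_c=g_c(k)=k/(1+k)^2$, and let $T_0\in\mathcal T_{\rm fin}$ have height $r$ with $K=|D_r(T_0)|$ vertices at height $r$. For each $M\in\mathbb N$ there exists $d>0$ such that, as $N\to\infty$, $$\nu_N^{(\mu)}\big(\mathcal B_{1/r}(T_0)\big)\ \ge\ K\,k^{r-1}g_c^{|T_0|-K}\Big(\sum_{S=1}^MC_{S-1}g_c^S\Big)^{K-1}\big(1+O(e^{-dN})\big).$$
   Context: Rooted planar trees: vertices at height $r$ form the ordered set $D_r(T)$, $D_0=\{$root$\}$, $|D_1|=1$; $|T|$ = number of edges; $h(T)$ = height. $\mathcal B_{1/r}(T_0)=\{T: B_r(T)=T_0\}$ where $B_r(T)$ is the subtree spanned by vertices of height $\le r$. $Z_N^{(\mu)}=\sum_{|T|=N}e^{-\mu h(T)}$ and $\nu_N^{(\mu)}$ is the probability measure on trees of size $N$ with $\nu_N^{(\mu)}(T)=e^{-\mu h(T)}/Z_N^{(\mu)}$. $C_n=\frac{(2n)!}{n!(n+1)!}$ are the Catalan numbers. *)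

theory Defs
  imports "HOL-Analysis.Analysis" "HOL-Library.Landau_Symbols"
begin

datatype ptree = Node "ptree list"

fun edges :: "ptree \<Rightarrow> nat" where
  "edges (Node ts) = sum_list (map (\<lambda>t. edges t + 1) ts)"

fun height :: "ptree \<Rightarrow> nat" where
  "height (Node ts) = foldr (\<lambda>t m. max (Suc (height t)) m) ts 0"

fun level_count :: "nat \<Rightarrow> ptree \<Rightarrow> nat" where
  "level_count 0 t = 1"
| "level_count (Suc n) (Node ts) = sum_list (map (level_count n) ts)"

fun truncate :: "nat \<Rightarrow> ptree \<Rightarrow> ptree" where
  "truncate 0 t = Node []"
| "truncate (Suc n) (Node ts) = Node (map (truncate n) ts)"

text \<open>Standing convention |D_1(T)| = 1: the root has exactly one child.\<close>
definition planted :: "ptree \<Rightarrow> bool" where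
  "planted T \<longleftrightarrow> level_count 1 T = 1"

definition trees_of_size :: "nat \<Rightarrow> ptree set" where
  "trees_of_size N = {T. planted T \<and> edges T = N}"

definition Zpart :: "real \<Rightarrow> nat \<Rightarrow> real" where
  "Zpart \<mu> N = (\<Sum>T\<in>trees_of_size N. exp (- \<mu> * real (height T)))"

definition nu :: "real \<Rightarrow> nat \<Rightarrow> ptree set \<Rightarrow> real" where
  "nu \<mu> N A = (\<Sum>T\<in>trees_of_size N \<inter> A. exp (- \<mu> * real (height T))) / Zpart \<mu> N"

definition ball_tree :: "nat \<Rightarrow> ptree \<Rightarrow> ptree set" where
  "ball_tree r T0 = {T. planted T \<and> truncate r T = T0}"

definition catalan :: "nat \<Rightarrow> real" where
  "catalan n = fact (2*n) / (fact n * fact (n+1))"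

end

theory Submission
  imports Defs "HOL-Complex_Analysis.Complex_Analysis"
begin

lemma height_Nil[simp]: "height (Node []) = 0" by simp

lemma height_Cons: "height (Node (t # ts)) = max (Suc (height t)) (height (Node ts))"
  by simp

lemma height_append: "height (Node (xs @ ys)) = max (height (Node xs)) (height (Node ys))"
  by (induction xs) (auto simp: max_def)

lemma edges_Cons: "edges (Node (t # ts)) = edges t + 1 + edges (Node ts)"
  by simp

lemma edges_append: "edges (Node (xs @ ys)) = edges (Node xs) + edges (Node ys)"
  by (induction xs) auto

lemma height_single[simp]: "height (Node [x]) = Suc (height x)" by simp

lemma height_le_edges: "height t \<le> edges t"
proof (induction t)
  case (Node ts)
  then show ?case
  proof (induction ts)
    case (Cons a ts)
    then have "height a \<le> edges a" "height (Node ts) \<le> edges (Node ts)" by auto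
    then show ?case by (simp add: max_def)
  qed simp
qed

lemma height_Node_ge: "x \<in> set ts \<Longrightarrow> Suc (height x) \<le> height (Node ts)"
  by (induction ts) auto

lemma edges_Node_ge: "x \<in> set ts \<Longrightarrow> Suc (edges x) \<le> edges (Node ts)"
  by (induction ts) auto

definition Tset :: "nat \<Rightarrow> ptree set" where
  "Tset n = {t. edges t = n}"

fun ncons :: "ptree \<Rightarrow> ptree \<Rightarrow> ptree" where
  "ncons t (Node ts) = Node (t # ts)"

lemma edges_ncons: "edges (ncons t s) = edges t + 1 + edges s"
  by (cases s) auto

lemma Tset_0: "Tset 0 = {Node []}"
proof -
  have "edges t = 0 \<longleftrightarrow> t = Node []" for t
    by (cases t) (auto)
  then show ?thesis unfolding Tset_def by auto
qed

lemma Tset_Suc: "Tset (Suc n) = (\<lambda>(t,s). ncons t s) ` (\<Union>i\<le>n. Tset i \<times> Tset (n - i))"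
proof (intro equalityI subsetI)
  fix u assume "u \<in> Tset (Suc n)"
  then obtain ts where u: "u = Node ts" and e: "edges (Node ts) = Suc n"
    unfolding Tset_def by (cases u) auto
  then obtain t ts' where ts: "ts = t # ts'" by (cases ts) auto
  have "edges t + 1 + edges (Node ts') = Suc n" using e ts by simp
  then have "(t, Node ts') \<in> (\<Union>i\<le>n. Tset i \<times> Tset (n - i))"
    unfolding Tset_def by (intro UN_I[of "edges t"]) auto
  moreover have "u = (\<lambda>(t,s). ncons t s) (t, Node ts')" using u ts by simp
  ultimately show "u \<in> (\<lambda>(t,s). ncons t s) ` (\<Union>i\<le>n. Tset i \<times> Tset (n - i))" by blast
next
  fix u assume "u \<in> (\<lambda>(t,s). ncons t s) ` (\<Union>i\<le>n. Tset i \<times> Tset (n - i))"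
  then show "u \<in> Tset (Suc n)"
    unfolding Tset_def by (auto simp: edges_ncons)
qed

lemma finite_Tset: "finite (Tset n)"
proof (induction n rule: less_induct)
  case (less n)
  show ?case
  proof (cases n)
    case 0 then show ?thesis by (simp add: Tset_0)
  next
    case (Suc m)
    have "finite (\<Union>i\<le>m. Tset i \<times> Tset (m - i))"
      using less Suc by (intro finite_UN_I) auto
    then show ?thesis unfolding Suc Tset_Suc by blast
  qed
qed

definition cnt :: "nat \<Rightarrow> nat" where
  "cnt n = card (Tset n)"

lemma inj_ncons: "inj (\<lambda>(t,s). ncons t s)"
proof (rule injI)
  fix a b :: "ptree \<times> ptree"
  assume "(\<lambda>(t,s). ncons t s) a = (\<lambda>(t,s). ncons t s) b"
  then show "a = b"
    by (cases a; cases b) (metis ncons.simps ptree.exhaust ptree.inject list.inject old.prod.case)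
qed

lemma cnt_0: "cnt 0 = 1" by (simp add: cnt_def Tset_0)

lemma cnt_Suc: "cnt (Suc n) = (\<Sum>i\<le>n. cnt i * cnt (n - i))"
proof -
  have "cnt (Suc n) = card (\<Union>i\<le>n. Tset i \<times> Tset (n - i))"
    unfolding cnt_def Tset_Suc by (rule card_image) (rule inj_on_subset[OF inj_ncons], simp)
  also have "\<dots> = (\<Sum>i\<le>n. card (Tset i \<times> Tset (n - i)))"
    by (rule card_UN_disjoint) (auto simp: finite_Tset[unfolded Tset_def] Tset_def)
  also have "\<dots> = (\<Sum>i\<le>n. cnt i * cnt (n - i))"
    by (simp add: card_cartesian_product cnt_def)
  finally show ?thesis .
qed

fun comb :: "ptree \<Rightarrow> ptree \<Rightarrow> ptree" where
  "comb (Node (Node L # R)) x = Node (L @ [x] @ R)"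
| "comb (Node []) x = Node [x]"

lemma edges_pos_shape: "1 \<le> edges p \<Longrightarrow> \<exists>L R. p = Node (Node L # R)"
proof -
  assume a: "1 \<le> edges p"
  obtain ts where p: "p = Node ts" by (cases p)
  show ?thesis
  proof (cases ts)
    case Nil then show ?thesis using a p by simp
  next
    case (Cons c R)
    obtain L where "c = Node L" by (cases c)
    then show ?thesis using p Cons by auto
  qed
qed

lemma edges_comb: "1 \<le> edges p \<Longrightarrow> edges (comb p x) = edges p + edges x"
proof -
  assume "1 \<le> edges p"
  then obtain L R where p: "p = Node (Node L # R)" using edges_pos_shape by blast
  show ?thesis unfolding p by (simp add: edges_append)
qed

lemma exists_max_child: "ts \<noteq> [] \<Longrightarrow> \<exists>x\<in>set ts. height (Node ts) = Suc (height x)"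
proof (induction ts)
  case (Cons a ts)
  show ?case
  proof (cases "ts = []")
    case True then show ?thesis by simp
  next
    case False
    then obtain x where "x \<in> set ts" "height (Node ts) = Suc (height x)" using Cons by auto
    then show ?thesis by (auto simp: max_def)
  qed
qed simp

lemma Tset_comb_cover:
  assumes "1 \<le> n"
  shows "Tset n \<subseteq> (\<lambda>(p,x). comb p x) `
           {(p,x). 1 \<le> edges p \<and> edges p + edges x = n \<and> height (comb p x) = Suc (height x)}"
proof
  fix t assume t: "t \<in> Tset n"
  obtain ts where tt: "t = Node ts" by (cases t)
  have "ts \<noteq> []" using t assms tt unfolding Tset_def by auto
  then obtain x where x: "x \<in> set ts" "height (Node ts) = Suc (height x)"
    using exists_max_child by blast
  then obtain L R where ts: "ts = L @ x # R" by (meson split_list)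
  define p where "p = Node (Node L # R)"
  have c: "comb p x = t" unfolding p_def tt ts by simp
  have "1 \<le> edges p" unfolding p_def by simp
  moreover have "edges p + edges x = n" using edges_comb[OF \<open>1 \<le> edges p\<close>, of x] c t
    unfolding Tset_def by simp
  moreover have "height (comb p x) = Suc (height x)" using c x tt by simp
  ultimately show "t \<in> (\<lambda>(p,x). comb p x) `
           {(p,x). 1 \<le> edges p \<and> edges p + edges x = n \<and> height (comb p x) = Suc (height x)}"
    using c by (intro image_eqI[of _ _ "(p,x)"]) auto
qed

definition Qw :: "real \<Rightarrow> nat \<Rightarrow> real" where
  "Qw k n = (\<Sum>t\<in>Tset n. k ^ height t)"

lemma pairs_split:
  "{(p,x). 1 \<le> edges p \<and> edges p + edges x = n} = (\<Union>m<n. Tset (Suc m) \<times> Tset (n - 1 - m))"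
proof (intro equalityI subsetI)
  fix z assume "z \<in> {(p,x). 1 \<le> edges p \<and> edges p + edges x = n}"
  then obtain p x where z: "z = (p,x)" "1 \<le> edges p" "edges p + edges x = n" by auto
  then show "z \<in> (\<Union>m<n. Tset (Suc m) \<times> Tset (n - 1 - m))"
    unfolding Tset_def by (intro UN_I[of "edges p - 1"]) auto
qed (auto simp: Tset_def)

lemma sum_pairs_split:
  fixes f :: "ptree \<Rightarrow> real"
  assumes "\<And>m. m < n \<Longrightarrow> X m \<subseteq> Tset (n - 1 - m)"
  shows "(\<Sum>(p,x)\<in>(\<Union>m<n. Tset (Suc m) \<times> X m). f x) = (\<Sum>m<n. real (cnt (Suc m)) * (\<Sum>x\<in>X m. f x))"
proof -
  have fin: "finite (X m)" if "m < n" for m using assms[OF that] finite_Tset finite_subset by blast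
  have "(\<Sum>(p,x)\<in>(\<Union>m<n. Tset (Suc m) \<times> X m). f x) = (\<Sum>m<n. \<Sum>(p,x)\<in>Tset (Suc m) \<times> X m. f x)"
  proof (rule sum.UNION_disjoint)
    show "\<forall>i\<in>{..<n}. finite (Tset (Suc i) \<times> X i)" using fin finite_Tset by auto
    show "\<forall>i\<in>{..<n}. \<forall>j\<in>{..<n}. i \<noteq> j \<longrightarrow> Tset (Suc i) \<times> X i \<inter> Tset (Suc j) \<times> X j = {}"
      unfolding Tset_def by auto
  qed simp
  also have "\<dots> = (\<Sum>m<n. real (cnt (Suc m)) * (\<Sum>x\<in>X m. f x))"
    by (intro sum.cong refl) (simp add: sum.cartesian_product[symmetric] cnt_def)
  finally show ?thesis .
qed

lemma Qw_upper:
  assumes "1 \<le> n" "0 \<le> k"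
  shows "Qw k n \<le> (\<Sum>m<n. real (cnt (Suc m)) * (k * Qw k (n - 1 - m)))"
proof -
  let ?D = "{(p,x). 1 \<le> edges p \<and> edges p + edges x = n \<and> height (comb p x) = Suc (height x)}"
  let ?E = "{(p,x). 1 \<le> edges p \<and> edges p + edges x = n}"
  have finE: "finite ?E" unfolding pairs_split using finite_Tset by auto
  have finD: "finite ?D" by (rule finite_subset[OF _ finE]) auto
  have "Qw k n \<le> (\<Sum>t\<in>(\<lambda>(p,x). comb p x) ` ?D. k ^ height t)"
    unfolding Qw_def using Tset_comb_cover[OF assms(1)] finD assms(2)
    by (intro sum_mono2) auto
  also have "\<dots> \<le> (\<Sum>(p,x)\<in>?D. k ^ height (comb p x))"
    using sum_image_le[OF finD, of "\<lambda>t. k ^ height t" "\<lambda>(p,x). comb p x"] assms(2)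
    by (simp add: case_prod_unfold)
  also have "\<dots> = (\<Sum>(p,x)\<in>?D. k * k ^ height x)"
    by (intro sum.cong) auto
  also have "\<dots> \<le> (\<Sum>(p,x)\<in>?E. k * k ^ height x)"
    using finE assms(2) by (intro sum_mono2) auto
  also have "\<dots> = (\<Sum>m<n. real (cnt (Suc m)) * (\<Sum>x\<in>Tset (n - 1 - m). k * k ^ height x))"
    unfolding pairs_split by (rule sum_pairs_split) auto
  also have "\<dots> = (\<Sum>m<n. real (cnt (Suc m)) * (k * Qw k (n - 1 - m)))"
    by (simp add: Qw_def sum_distrib_left)
  finally show ?thesis .
qed

lemma sibling_height:
  assumes "edges (Node (Node L # R)) = Suc m" "l \<in> set (L @ R)"
  shows "height l < m"
proof -
  have "edges (Node (L @ R)) = m" using assms(1) by (simp add: edges_append)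
  then have "Suc (edges l) \<le> m" using edges_Node_ge[OF assms(2)] by simp
  then show ?thesis using height_le_edges[of l] by simp
qed

lemma height_comb_big:
  assumes "edges (Node (Node L # R)) = Suc m" "m \<le> height x"
  shows "height (comb (Node (Node L # R)) x) = Suc (height x)"
proof -
  have e: "edges (Node L) + edges (Node R) \<le> m" using assms(1) by simp
  have "height (Node L) \<le> m" using height_le_edges[of "Node L"] e by simp
  moreover have "height (Node R) \<le> m" using height_le_edges[of "Node R"] e by simp
  moreover have "height (Node (L @ [x] @ R)) = max (height (Node L)) (max (Suc (height x)) (height (Node R)))"
    by (simp only: height_append append_Cons append_Nil height_Cons)
  ultimately show ?thesis using assms(2) by simp
qed

lemma comb_inj:
  assumes "edges p = Suc m" "m \<le> height x" "edges p' = Suc m'" "m' \<le> height x'"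
    and "comb p x = comb p' x'"
  shows "p = p' \<and> x = x'"
proof -
  obtain L R where p: "p = Node (Node L # R)" using assms(1) edges_pos_shape[of p] by auto
  obtain L' R' where p': "p' = Node (Node L' # R')" using assms(3) edges_pos_shape[of p'] by auto
  have eq: "L @ x # R = L' @ x' # R'" using assms(5) unfolding p p' by simp
  show ?thesis
  proof (cases "length L = length L'")
    case True
    then show ?thesis using eq unfolding p p' by auto
  next
    case False
    have "x' \<in> set (L @ R) \<and> x \<in> set (L' @ R')"
    proof (cases "length L < length L'")
      case True
      from eq obtain us where us: "(L = L' @ us \<and> us @ x # R = x' # R') \<or> (L @ us = L' \<and> x # R = us @ x' # R')"
        by (auto simp: append_eq_append_conv2)
      then show ?thesis
      proof
        assume h: "L = L' @ us \<and> us @ x # R = x' # R'"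
        then have "length L' \<le> length L" by simp
        then show ?thesis using True by simp
      next
        assume h: "L @ us = L' \<and> x # R = us @ x' # R'"
        show ?thesis
        proof (cases us)
          case Nil then show ?thesis using h False by auto
        next
          case (Cons u us')
          then have "u = x" "R = us' @ x' # R'" using h by auto
          then show ?thesis using h Cons by auto
        qed
      qed
    next
      case False2: False
      from eq obtain us where us: "(L = L' @ us \<and> us @ x # R = x' # R') \<or> (L @ us = L' \<and> x # R = us @ x' # R')"
        by (auto simp: append_eq_append_conv2)
      then show ?thesis
      proof
        assume h: "L = L' @ us \<and> us @ x # R = x' # R'"
        show ?thesis
        proof (cases us)
          case Nil then show ?thesis using h False by auto
        next
          case (Cons u us')
          then have "u = x'" "R' = us' @ x # R" using h by auto
          then show ?thesis using h Cons by auto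
        qed
      next
        assume h: "L @ us = L' \<and> x # R = us @ x' # R'"
        then have "length L \<le> length L'" by (metis le_add1 length_append)
        then show ?thesis using False2 False by simp
      qed
    qed
    then have "height x' < m" "height x < m'"
      using sibling_height assms(1,3) unfolding p p' by blast+
    then show ?thesis using assms(2,4) by simp
  qed
qed

lemma Qw_lower_gen:
  assumes "0 \<le> k"
    and X: "\<And>m. m < n \<Longrightarrow> X m \<subseteq> {x\<in>Tset (n - 1 - m). m \<le> height x}"
    and P: "\<And>m p x. m < n \<Longrightarrow> p \<in> Tset (Suc m) \<Longrightarrow> x \<in> X m \<Longrightarrow> P (comb p x)"
  shows "(\<Sum>m<n. real (cnt (Suc m)) * (k * (\<Sum>x\<in>X m. k ^ height x)))
         \<le> (\<Sum>t\<in>{t\<in>Tset n. P t}. k ^ height t)"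
proof -
  let ?D = "\<Union>m<n. Tset (Suc m) \<times> X m"
  have X': "X m \<subseteq> Tset (n - 1 - m)" if "m < n" for m using X[OF that] by auto
  have finX: "finite (X m)" if "m < n" for m using X'[OF that] finite_Tset by (rule finite_subset)
  have finD: "finite ?D" using finX finite_Tset by (intro finite_UN_I finite_cartesian_product) auto
  have hD: "height (comb p x) = Suc (height x)" if pxD: "(p,x) \<in> ?D" for p x
  proof -
    obtain m where m: "m < n" "p \<in> Tset (Suc m)" "x \<in> X m" using pxD by blast
    obtain L R where p: "p = Node (Node L # R)" using m(2) edges_pos_shape[of p] unfolding Tset_def by auto
    show ?thesis using height_comb_big[of L R m x] m X[OF m(1)] p unfolding Tset_def by auto
  qed
  have inj: "inj_on (\<lambda>(p,x). comb p x) ?D"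
  proof (rule inj_onI)
    fix a b assume a: "a \<in> ?D" and b: "b \<in> ?D" and e: "(\<lambda>(p,x). comb p x) a = (\<lambda>(p,x). comb p x) b"
    obtain p x p' x' where ab: "a = (p,x)" "b = (p',x')" by (cases a; cases b)
    obtain m where m: "m < n" "p \<in> Tset (Suc m)" "x \<in> X m" using a ab by auto
    obtain m' where m': "m' < n" "p' \<in> Tset (Suc m')" "x' \<in> X m'" using b ab by auto
    have "p = p' \<and> x = x'"
      using comb_inj[of p m x p' m' x'] m m' X[OF m(1)] X[OF m'(1)] e ab unfolding Tset_def by auto
    then show "a = b" using ab by simp
  qed
  have img: "(\<lambda>(p,x). comb p x) ` ?D \<subseteq> {t\<in>Tset n. P t}"
  proof
    fix t assume "t \<in> (\<lambda>(p,x). comb p x) ` ?D"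
    then obtain m p x where m: "m < n" "p \<in> Tset (Suc m)" "x \<in> X m" and t: "t = comb p x" by auto
    have "edges t = n" using edges_comb[of p x] m X'[OF m(1)] t unfolding Tset_def by auto
    then show "t \<in> {t\<in>Tset n. P t}" using P[OF m] t unfolding Tset_def by auto
  qed
  have "(\<Sum>m<n. real (cnt (Suc m)) * (k * (\<Sum>x\<in>X m. k ^ height x)))
      = (\<Sum>(p,x)\<in>?D. k * k ^ height x)"
    by (subst sum_pairs_split[OF X']) (auto simp: sum_distrib_left)
  also have "\<dots> = (\<Sum>(p,x)\<in>?D. k ^ height (comb p x))"
  proof (rule sum.cong[OF refl])
    fix z assume z: "z \<in> ?D"
    obtain p x where zz: "z = (p,x)" by (cases z)
    show "(case z of (p,x) \<Rightarrow> k * k ^ height x) = (case z of (p,x) \<Rightarrow> k ^ height (comb p x))"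
      using hD[of p x] z zz by simp
  qed
  also have "\<dots> = (\<Sum>t\<in>(\<lambda>(p,x). comb p x) ` ?D. k ^ height t)"
    using sum.reindex[OF inj, of "\<lambda>t. k ^ height t"] by (simp add: case_prod_unfold)
  also have "\<dots> \<le> (\<Sum>t\<in>{t\<in>Tset n. P t}. k ^ height t)"
    using img assms(1) finite_Tset by (intro sum_mono2) auto
  finally show ?thesis .
qed


definition cc :: "nat \<Rightarrow> real" where "cc n = real (cnt n)"

lemma cc0: "cc 0 = 1" by (simp add: cc_def cnt_0)
lemma cc_nonneg: "0 \<le> cc n" by (simp add: cc_def)
lemma cc_Suc: "cc (Suc n) = (\<Sum>i\<le>n. cc i * cc (n - i))"
  by (simp add: cc_def cnt_Suc)

definition PS :: "nat \<Rightarrow> real \<Rightarrow> real" where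
  "PS N x = (\<Sum>n\<le>N. cc n * x ^ n)"

lemma conv_sum_eq:
  "(\<Sum>n\<le>N. (\<Sum>i\<le>n. cc i * cc (n - i)) * x ^ n)
   = (\<Sum>(i,j)\<in>{(i,j). i+j \<le> N}. (cc i * x ^ i) * (cc j * x ^ j))"
proof -
  have "(\<Sum>(i,j)\<in>{(i,j). i+j \<le> N}. (cc i * x ^ i) * (cc j * x ^ j))
      = (\<Sum>n\<le>N. \<Sum>i\<le>n. (cc i * x ^ i) * (cc (n - i) * x ^ (n - i)))"
    by (rule sum.triangle_reindex_eq)
  also have "\<dots> = (\<Sum>n\<le>N. (\<Sum>i\<le>n. cc i * cc (n - i)) * x ^ n)"
    by (auto simp: algebra_simps sum_distrib_left simp flip: power_add intro!: sum.cong)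
  finally show ?thesis by simp
qed

lemma PS_Suc: "PS (Suc N) x = 1 + x * (\<Sum>n\<le>N. (\<Sum>i\<le>n. cc i * cc (n - i)) * x ^ n)"
proof -
  have "PS (Suc N) x = cc 0 * x ^ 0 + (\<Sum>n\<le>N. cc (Suc n) * x ^ Suc n)"
    unfolding PS_def by (rule sum.atMost_Suc_shift)
  also have "\<dots> = 1 + x * (\<Sum>n\<le>N. (\<Sum>i\<le>n. cc i * cc (n - i)) * x ^ n)"
    by (simp add: cc0 cc_Suc sum_distrib_left algebra_simps)
  finally show ?thesis .
qed

lemma PS_sq: "(PS N x)^2 = (\<Sum>(i,j)\<in>{..N}\<times>{..N}. (cc i * x ^ i) * (cc j * x ^ j))"
  unfolding PS_def power2_eq_square sum_product sum.cartesian_product by simp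

lemma PS_upper:
  assumes "0 \<le> x" shows "PS (Suc N) x \<le> 1 + x * (PS N x)^2"
proof -
  have "(\<Sum>(i,j)\<in>{(i,j). i+j \<le> N}. (cc i * x ^ i) * (cc j * x ^ j))
        \<le> (\<Sum>(i,j)\<in>{..N}\<times>{..N}. (cc i * x ^ i) * (cc j * x ^ j))"
    using assms by (intro sum_mono2) (auto intro!: mult_nonneg_nonneg cc_nonneg)
  then show ?thesis unfolding PS_Suc conv_sum_eq PS_sq using assms
    by (intro add_left_mono mult_left_mono) auto
qed

lemma PS_lower:
  assumes "0 \<le> x" shows "1 + x * (PS N x)^2 \<le> PS (Suc (2*N)) x"
proof -
  have fin: "finite {(i,j). i+j \<le> 2*N}"
    by (rule finite_subset[of _ "{..2*N}\<times>{..2*N}"]) auto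
  have "(\<Sum>(i,j)\<in>{..N}\<times>{..N}. (cc i * x ^ i) * (cc j * x ^ j))
        \<le> (\<Sum>(i,j)\<in>{(i,j). i+j \<le> 2*N}. (cc i * x ^ i) * (cc j * x ^ j))"
    using assms fin by (intro sum_mono2) (auto intro!: mult_nonneg_nonneg cc_nonneg)
  then show ?thesis unfolding PS_Suc conv_sum_eq PS_sq using assms
    by (intro add_left_mono mult_left_mono) auto
qed

lemma PS_bound:
  assumes "0 \<le> x" "0 \<le> r" "1 + x * r^2 = r"
  shows "PS N x \<le> r"
proof (induction N)
  case 0
  have "PS 0 x = 1" by (simp add: PS_def cc0)
  moreover have "1 \<le> r" using assms by (metis le_add_same_cancel1 mult_nonneg_nonneg zero_le_power2)
  ultimately show ?case by simp
next
  case (Suc N)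
  have "0 \<le> PS N x" unfolding PS_def using assms by (auto intro!: sum_nonneg mult_nonneg_nonneg cc_nonneg)
  then have "(PS N x)^2 \<le> r^2" using Suc by (intro power_mono) auto
  then have "1 + x * (PS N x)^2 \<le> 1 + x * r^2" using assms by (intro add_left_mono mult_left_mono) auto
  then show ?case using PS_upper[OF assms(1), of N] assms(3) by simp
qed

lemma cc_le: "cc n \<le> 2 * 4 ^ n"
proof -
  have "PS n (1/4) \<le> 2" by (rule PS_bound) auto
  moreover have "cc n * (1/4)^n \<le> PS n (1/4)"
    unfolding PS_def by (rule member_le_sum) (auto intro!: mult_nonneg_nonneg cc_nonneg)
  ultimately have "cc n * (1/4)^n \<le> 2" by simp
  then show ?thesis by (simp add: field_simps power_divide)
qed

lemma gf_value:
  fixes k g :: real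
  assumes k: "1 < k" and g: "g = k / (1 + k)^2"
  shows "(\<lambda>n. cc n * g ^ n) sums ((1 + k) / k)"
proof -
  define r where "r = (1 + k) / k"
  have g0: "0 \<le> g" using g k by simp
  have kp: "0 < k" using k by simp
  have "g * r^2 = k / (1+k)^2 * ((1+k)^2 / k^2)" unfolding g r_def by (simp add: power_divide)
  also have "\<dots> = 1 / k" using kp by (simp add: power2_eq_square)
  finally have gr: "g * r^2 = 1 / k" .
  have "1 + g * r^2 = 1 + 1 / k" using gr by simp
  also have "\<dots> = r" unfolding r_def using kp by (simp add: field_simps)
  finally have rr: "1 + g * r^2 = r" .
  have r0: "0 \<le> r" unfolding r_def using k by simp
  have nn: "0 \<le> cc n * g ^ n" for n using g0 by (simp add: cc_nonneg)
  have ps: "sum (\<lambda>n. cc n * g ^ n) {..<N} \<le> r" for N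
  proof (cases N)
    case 0 then show ?thesis using r0 by simp
  next
    case (Suc M)
    then have "sum (\<lambda>n. cc n * g ^ n) {..<N} = PS M g" unfolding PS_def using lessThan_Suc_atMost by simp
    then show ?thesis using PS_bound[OF g0 r0 rr] by simp
  qed
  have sm: "summable (\<lambda>n. cc n * g ^ n)" by (rule summableI_nonneg_bounded[OF nn ps])
  define F where "F = suminf (\<lambda>n. cc n * g ^ n)"
  have Fle: "F \<le> r" unfolding F_def by (rule suminf_le_const[OF sm ps])
  have lim: "(\<lambda>N. PS N g) \<longlonglongrightarrow> F" unfolding PS_def F_def by (rule summable_LIMSEQ'[OF sm])
  have "PS (Suc (2*N)) g \<le> F" for N
    unfolding F_def PS_def using sum_le_suminf[OF sm, of "{..Suc (2*N)}"] nn by auto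
  then have le: "1 + g * (PS N g)^2 \<le> F" for N using PS_lower[OF g0, of N] by (meson order_trans)
  have lim2: "(\<lambda>N. 1 + g * (PS N g)^2) \<longlonglongrightarrow> 1 + g * F^2"
    by (intro tendsto_intros lim)
  have Fge: "1 + g * F^2 \<le> F" using le by (intro LIMSEQ_le_const2[OF lim2]) auto
  have s1: "g * (r + (1 + k)) = 1" unfolding g r_def using kp
    by (simp add: divide_simps) (simp add: algebra_simps power2_eq_square)
  have s2: "g * (r * (1 + k)) = 1" unfolding g r_def using kp
    by (simp add: divide_simps) (simp add: algebra_simps power2_eq_square)
  have fact: "g * F^2 - F + 1 = g * (F - r) * (F - (1 + k))"
  proof -
    have "g * (F - r) * (F - (1 + k)) = g * F^2 - F * (g * (r + (1 + k))) + g * (r * (1 + k))"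
      by (simp add: algebra_simps power2_eq_square)
    then show ?thesis unfolding s1 s2 by simp
  qed
  have "1 < k * k" using k by (metis less_1_mult)
  then have "r < 1 + k" unfolding r_def using k by (simp add: field_simps)
  have "F = r"
  proof (rule ccontr)
    assume "F \<noteq> r"
    then have "F < r" using Fle by simp
    have gp: "0 < g" using g kp by simp
    have "0 < (F - r) * (F - (1 + k))"
      using \<open>F < r\<close> \<open>r < 1 + k\<close> by (intro mult_neg_neg) auto
    then have "0 < g * (F - r) * (F - (1 + k))"
      using gp by (simp add: mult.assoc)
    then show False using Fge fact by linarith
  qed
  then show ?thesis using sm unfolding F_def r_def by (metis summable_sums)
qed

definition Cf :: "real fps" where "Cf = Abs_fps cc"

lemma Cf_eq: "Cf = 1 + fps_X * Cf^2"
proof (rule fps_ext)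
  fix n
  show "fps_nth Cf n = fps_nth (1 + fps_X * Cf^2) n"
  proof (cases n)
    case 0 then show ?thesis by (simp add: Cf_def cc0)
  next
    case (Suc m)
    have "fps_nth (1 + fps_X * Cf^2) n = fps_nth (Cf * Cf) m"
      using Suc by (simp add: fps_X_mult_nth power2_eq_square)
    also have "\<dots> = (\<Sum>i=0..m. cc i * cc (m - i))" by (simp add: fps_mult_nth Cf_def)
    also have "\<dots> = cc n" using Suc by (simp add: cc_Suc atLeast0AtMost)
    finally show ?thesis by (simp add: Cf_def)
  qed
qed

lemma Cf_ode: "fps_X * (1 - 4 * fps_X) * fps_deriv Cf = 2 * fps_X * Cf - Cf + 1"
proof -
  define C where "C = Cf"
  define D where "D = fps_deriv Cf"
  define X where "X = (fps_X :: real fps)"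
  have H1: "C = 1 + X * C^2" unfolding C_def X_def by (rule Cf_eq)
  have H2: "D = C^2 + X * (2 * C * D)"
  proof -
    have "D = fps_deriv (1 + X * C^2)" unfolding D_def using H1 C_def by simp
    also have "\<dots> = C^2 + X * (2 * C * D)"
      unfolding X_def C_def D_def by (simp add: fps_deriv_power algebra_simps power2_eq_square)
    finally show ?thesis .
  qed
  have e1: "D * (1 - 2 * X * C) = C^2" using H2 by (simp add: algebra_simps)
  have XC2: "X * C^2 = C - 1" by (metis H1 add_diff_cancel_left')
  have e2: "(1 - 2 * X * C)^2 = 1 - 4 * X"
  proof -
    have "(1 - 2 * X * C)^2 = 1 - 4 * X * C + 4 * X * (X * C^2)" by (simp add: algebra_simps power2_eq_square)
    also have "\<dots> = 1 - 4 * X" unfolding XC2 by (simp add: algebra_simps)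
    finally show ?thesis .
  qed
  have e3: "D * (1 - 4 * X) = 2 * C - C^2"
  proof -
    have "D * (1 - 4 * X) = D * (1 - 2 * X * C) * (1 - 2 * X * C)" unfolding e2[symmetric] by (simp add: power2_eq_square algebra_simps)
    also have "\<dots> = C^2 - 2 * C * (X * C^2)" unfolding e1 by (simp add: algebra_simps power2_eq_square)
    also have "\<dots> = 2 * C - C^2" unfolding XC2 by (simp add: algebra_simps power2_eq_square)
    finally show ?thesis .
  qed
  have "X * (1 - 4 * X) * D = X * (D * (1 - 4 * X))" by (simp add: algebra_simps)
  also have "\<dots> = 2 * X * C - X * C^2" unfolding e3 by (simp add: algebra_simps)
  also have "\<dots> = 2 * X * C - C + 1" unfolding XC2 by simp
  finally show ?thesis unfolding X_def C_def D_def .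
qed

lemma cc_rec: "real (n + 2) * cc (Suc n) = real (4 * n + 2) * cc n"
proof -
  have "fps_nth (fps_X * (1 - 4 * fps_X) * fps_deriv Cf) (Suc n) = fps_nth (2 * fps_X * Cf - Cf + 1) (Suc n)"
    using Cf_ode by simp
  moreover have "fps_nth (fps_X * (1 - 4 * fps_X) * fps_deriv Cf) (Suc n) = real (Suc n) * cc (Suc n) - 4 * real n * cc n"
  proof -
    have "fps_X * (1 - 4 * fps_X) * fps_deriv Cf = fps_X * fps_deriv Cf - 4 * (fps_X^2 * fps_deriv Cf)"
      by (simp add: algebra_simps power2_eq_square)
    moreover have "fps_nth (fps_X^2 * fps_deriv Cf) (Suc n) = real n * cc n"
      by (cases n) (auto simp: fps_X_power_mult_nth Cf_def)
    ultimately show ?thesis by (simp add: fps_X_mult_nth Cf_def)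
  qed
  moreover have "fps_nth (2 * fps_X * Cf - Cf + 1) (Suc n) = 2 * cc n - cc (Suc n)"
  proof -
    have "fps_nth (2 * fps_X * Cf) (Suc n) = 2 * cc n"
      by (simp add: fps_X_mult_nth Cf_def mult.assoc)
    then show ?thesis by (simp add: Cf_def)
  qed
  ultimately have "real (Suc n) * cc (Suc n) - 4 * real n * cc n = 2 * cc n - cc (Suc n)" by simp
  then show ?thesis by (simp add: algebra_simps)
qed

lemma cc_catalan: "cc n = catalan n"
proof (induction n)
  case 0 then show ?case by (simp add: cc0 catalan_def)
next
  case (Suc n)
  have "real (n + 2) * catalan (Suc n) = real (4 * n + 2) * catalan n"
  proof -
    define A where "A = (fact (2 * n) :: real)"
    define B where "B = (fact n :: real)"
    have B: "B > 0" unfolding B_def by simp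
    have f1: "fact (2 * Suc n) = (2 * real n + 2) * (2 * real n + 1) * A"
      unfolding A_def by (simp add: fact_Suc algebra_simps)
    have f3: "fact (Suc n) = (real n + 1) * B" unfolding B_def by (simp add: fact_Suc algebra_simps)
    have f2: "fact (Suc n + 1) = (real n + 2) * ((real n + 1) * B)"
      unfolding B_def by (simp add: fact_Suc algebra_simps)
    have c1: "catalan (Suc n) = (2 * real n + 2) * (2 * real n + 1) * A / (((real n + 1) * B) * ((real n + 2) * ((real n + 1) * B)))"
      unfolding catalan_def f1 f2 f3 by simp
    have c0: "catalan n = A / (B * ((real n + 1) * B))"
      unfolding catalan_def A_def B_def by (simp add: fact_Suc algebra_simps)
    define x where "x = real n"
    have h1: "x + 1 \<noteq> 0" "x + 2 \<noteq> 0" "B \<noteq> 0" using B unfolding x_def by auto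
    have "(x + 2) * ((2 * x + 2) * (2 * x + 1) * A / (((x + 1) * B) * ((x + 2) * ((x + 1) * B))))
       = ((2 * x + 2) * (2 * x + 1) * A) / ((x + 1) * B * ((x + 1) * B))"
      using h1 by (simp add: divide_simps)
    also have "\<dots> = (4 * x + 2) * (A / (B * ((x + 1) * B)))"
      using h1 by (simp add: divide_simps) (simp add: algebra_simps)
    finally have calc: "(x + 2) * ((2 * x + 2) * (2 * x + 1) * A / (((x + 1) * B) * ((x + 2) * ((x + 1) * B))))
       = (4 * x + 2) * (A / (B * ((x + 1) * B)))" .
    have e: "real (n+2) = x + 2" "real (4*n+2) = 4*x+2" by (simp_all add: x_def)
    show ?thesis unfolding e c1 c0 x_def[symmetric] using calc by simp
  qed
  then have "real (n + 2) * catalan (Suc n) = real (n + 2) * cc (Suc n)" using cc_rec[of n] Suc by simp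
  moreover have "real (n + 2) \<noteq> 0" by simp
  ultimately show ?case by simp
qed


lemma n_geom_bound:
  fixes \<eta> :: real
  assumes "0 < \<eta>" "\<eta> < 1"
  shows "\<exists>C. \<forall>n. real n * \<eta> ^ n \<le> C * ((1 + \<eta>) / 2) ^ n"
proof -
  define \<rho> where "\<rho> = 2 * \<eta> / (1 + \<eta>)"
  have \<rho>0: "0 < \<rho>" "\<rho> < 1" unfolding \<rho>_def using assms by (auto simp: field_simps)
  define \<delta> where "\<delta> = 1 / \<rho> - 1"
  have \<delta>0: "0 < \<delta>" unfolding \<delta>_def using \<rho>0 by (simp add: field_simps)
  have "\<forall>n. real n * \<eta> ^ n \<le> (1 / \<delta>) * ((1 + \<eta>) / 2) ^ n"
  proof
    fix n
    have "1 + real n * \<delta> \<le> (1 + \<delta>) ^ n" using \<delta>0 by (intro Bernoulli_inequality) simp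
    then have "real n * \<delta> \<le> (1 / \<rho>) ^ n" unfolding \<delta>_def by simp
    then have "real n * \<delta> * \<rho> ^ n \<le> (1 / \<rho>) ^ n * \<rho> ^ n"
      using \<rho>0 by (intro mult_right_mono) auto
    also have "\<dots> = 1" using \<rho>0 by (simp add: power_one_over field_simps)
    finally have "real n * \<rho> ^ n \<le> 1 / \<delta>" using \<delta>0 by (simp add: field_simps)
    then have "real n * \<rho> ^ n * ((1 + \<eta>) / 2) ^ n \<le> (1 / \<delta>) * ((1 + \<eta>) / 2) ^ n"
      using assms by (intro mult_right_mono) auto
    moreover have "\<rho> * ((1 + \<eta>) / 2) = \<eta>" unfolding \<rho>_def using assms by (simp add: field_simps)
    ultimately show "real n * \<eta> ^ n \<le> (1 / \<delta>) * ((1 + \<eta>) / 2) ^ n"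
      by (simp add: mult.assoc power_mult_distrib[symmetric])
  qed
  then show ?thesis by blast
qed

lemma height_comb_Tset:
  assumes "p \<in> Tset (Suc m)" "m \<le> height x"
  shows "height (comb p x) = Suc (height x)"
proof -
  obtain L R where p: "p = Node (Node L # R)" using assms(1) edges_pos_shape[of p] unfolding Tset_def by auto
  show ?thesis using height_comb_big[of L R m x] assms p unfolding Tset_def by auto
qed

lemma min_le_powr:
  fixes y t :: real
  assumes "0 < y" "0 \<le> t" "t \<le> 1"
  shows "min 1 y \<le> y powr t"
proof (cases "y \<le> 1")
  case True
  have "y = y powr 1" using assms by simp
  also have "\<dots> \<le> y powr t" using True assms by (intro powr_mono') auto
  finally show ?thesis by simp
next
  case False
  then show ?thesis using ge_one_powr_ge_zero[of y t] assms by simp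
qed

locale rw =
  fixes k g :: real
  assumes k1: "1 < k" and gdef: "g = k / (1 + k)^2"
begin

lemma kpos: "0 < k" using k1 by simp
lemma gpos: "0 < g" using kpos gdef by simp
lemma g4: "4 * g < 1"
proof -
  have "0 < (k - 1)^2" using k1 by simp
  then have "4 * k < (1 + k)^2" by (simp add: power2_eq_square algebra_simps)
  then show ?thesis unfolding gdef using kpos by (simp add: field_simps)
qed

definition a :: "nat \<Rightarrow> real" where "a m = k * cc (Suc m) * g ^ Suc m"

lemma a_nonneg: "0 \<le> a m" unfolding a_def using kpos gpos by (simp add: cc_nonneg)

lemma cc1: "cc (Suc 0) = 1" by (simp add: cc_Suc cc0)

lemma a0: "a 0 = k * g" unfolding a_def by (simp add: cc1)

lemma a0_pos: "0 < a 0" unfolding a0 using kpos gpos by simp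

lemma a_sums: "a sums 1"
proof -
  have s: "(\<lambda>n. cc n * g ^ n) sums ((1 + k) / k)" by (rule gf_value[OF k1 gdef])
  have "(\<lambda>n. cc (Suc n) * g ^ Suc n) sums ((1 + k) / k - cc 0 * g ^ 0)"
    using s sums_Suc_iff[of "\<lambda>n. cc n * g ^ n"] by simp
  then have "(\<lambda>n. cc (Suc n) * g ^ Suc n) sums (1 / k)" using kpos by (simp add: cc0 field_simps)
  then have "(\<lambda>n. k * (cc (Suc n) * g ^ Suc n)) sums (k * (1 / k))" by (rule sums_mult)
  then show ?thesis unfolding a_def using kpos by (simp add: mult.assoc)
qed

lemma a_summable: "summable a" using a_sums by (rule sums_summable)

lemma sum_a_le1: "(\<Sum>m<n. a m) \<le> 1"
  using sum_le_suminf[OF a_summable, of "{..<n}"] a_nonneg a_sums by (auto simp: sums_iff)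

lemma a_le: "a m \<le> 2 * k * (4 * g) ^ Suc m"
proof -
  have "a m = k * (cc (Suc m) * g ^ Suc m)" unfolding a_def by simp
  also have "\<dots> \<le> k * (2 * 4 ^ Suc m * g ^ Suc m)"
    using kpos gpos cc_le[of "Suc m"] by (intro mult_left_mono mult_right_mono) auto
  also have "\<dots> = 2 * k * (4 * g) ^ Suc m" by (simp add: power_mult_distrib)
  finally show ?thesis .
qed

definition q :: "nat \<Rightarrow> real" where "q n = Qw k n * g ^ n"

lemma Qw_nonneg: "0 \<le> Qw k n" unfolding Qw_def using kpos by (intro sum_nonneg) auto

lemma q_nonneg: "0 \<le> q n" unfolding q_def using Qw_nonneg gpos by simp

lemma q0: "q 0 = 1" unfolding q_def Qw_def by (simp add: Tset_0)

lemma pow_split: "m < n \<Longrightarrow> (g::real) ^ n = g ^ Suc m * g ^ (n - 1 - m)"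
proof -
  assume "m < n"
  then have "n = Suc m + (n - 1 - m)" by simp
  then show ?thesis by (metis power_add)
qed

lemma q_upper: "1 \<le> n \<Longrightarrow> q n \<le> (\<Sum>m<n. a m * q (n - 1 - m))"
proof -
  assume n: "1 \<le> n"
  have "q n \<le> (\<Sum>m<n. real (cnt (Suc m)) * (k * Qw k (n - 1 - m))) * g ^ n"
    unfolding q_def using Qw_upper[OF n, of k] kpos gpos by (intro mult_right_mono) auto
  also have "\<dots> = (\<Sum>m<n. a m * q (n - 1 - m))"
    unfolding sum_distrib_right
    by (intro sum.cong refl) (simp add: a_def q_def cc_def pow_split)
  finally show ?thesis .
qed

lemma q_le1: "q n \<le> 1"
proof (induction n rule: less_induct)
  case (less n)
  show ?case
  proof (cases n)
    case 0 then show ?thesis by (simp add: q0)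
  next
    case (Suc n')
    have "q n \<le> (\<Sum>m<n. a m * q (n - 1 - m))" using Suc by (intro q_upper) simp
    also have "\<dots> \<le> (\<Sum>m<n. a m * 1)"
      using less Suc a_nonneg by (intro sum_mono mult_left_mono) auto
    also have "\<dots> \<le> 1" using sum_a_le1 by simp
    finally show ?thesis .
  qed
qed

definition qge :: "nat \<Rightarrow> nat \<Rightarrow> real" where
  "qge j n = g ^ n * (\<Sum>t\<in>{t\<in>Tset n. j \<le> height t}. k ^ height t)"

lemma qge_nonneg: "0 \<le> qge j n" unfolding qge_def using gpos kpos by (intro mult_nonneg_nonneg sum_nonneg) auto

lemma qge_le: "qge j n \<le> q n"
  unfolding qge_def q_def Qw_def using gpos kpos finite_Tset
  by (subst mult.commute) (intro mult_left_mono sum_mono2, auto)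

lemma q_qge: "q n - qge j n \<le> 2 * k ^ j * (4 * g) ^ n"
proof -
  have split: "Qw k n = (\<Sum>t\<in>{t\<in>Tset n. j \<le> height t}. k ^ height t) + (\<Sum>t\<in>{t\<in>Tset n. \<not> j \<le> height t}. k ^ height t)"
  proof -
    have "Tset n = {t\<in>Tset n. j \<le> height t} \<union> {t\<in>Tset n. \<not> j \<le> height t}" by auto
    then show ?thesis unfolding Qw_def using finite_Tset
      by (metis (no_types, lifting) sum.union_disjoint finite_Un disjoint_iff mem_Collect_eq)
  qed
  have "(\<Sum>t\<in>{t\<in>Tset n. \<not> j \<le> height t}. k ^ height t) \<le> (\<Sum>t\<in>{t\<in>Tset n. \<not> j \<le> height t}. k ^ j)"
    using k1 by (intro sum_mono power_increasing) auto
  also have "\<dots> \<le> (\<Sum>t\<in>Tset n. k ^ j)"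
    using kpos finite_Tset by (intro sum_mono2) auto
  also have "\<dots> = cc n * k ^ j" by (simp add: cc_def cnt_def)
  finally have "q n - qge j n \<le> g ^ n * (cc n * k ^ j)"
    unfolding q_def qge_def split using gpos by (simp add: algebra_simps)
  also have "\<dots> \<le> g ^ n * (2 * 4 ^ n * k ^ j)"
    using gpos kpos cc_le[of n] by (intro mult_left_mono mult_right_mono) auto
  also have "\<dots> = 2 * k ^ j * (4 * g) ^ n" by (simp add: power_mult_distrib algebra_simps)
  finally show ?thesis .
qed

lemma q_lower: "(\<Sum>m<n. a m * qge m (n - 1 - m)) \<le> q n"
proof -
  have "(\<Sum>m<n. real (cnt (Suc m)) * (k * (\<Sum>x\<in>{x\<in>Tset (n - 1 - m). m \<le> height x}. k ^ height x)))
         \<le> (\<Sum>t\<in>{t\<in>Tset n. True}. k ^ height t)"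
    using kpos by (intro Qw_lower_gen) auto
  then have "(\<Sum>m<n. real (cnt (Suc m)) * (k * (\<Sum>x\<in>{x\<in>Tset (n - 1 - m). m \<le> height x}. k ^ height x))) * g ^ n
         \<le> Qw k n * g ^ n" unfolding Qw_def using gpos by (intro mult_right_mono) auto
  moreover have "(\<Sum>m<n. real (cnt (Suc m)) * (k * (\<Sum>x\<in>{x\<in>Tset (n - 1 - m). m \<le> height x}. k ^ height x))) * g ^ n
     = (\<Sum>m<n. a m * qge m (n - 1 - m))"
    unfolding sum_distrib_right
    by (intro sum.cong refl) (simp add: a_def qge_def cc_def pow_split)
  ultimately show ?thesis unfolding q_def by simp
qed

lemma qge_rec:
  "(\<Sum>m<n. (if m \<le> J then a m * qge J (n - 1 - m) else 0)) \<le> qge J n"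
proof -
  define X where "X m = (if m \<le> J then {x\<in>Tset (n - 1 - m). J \<le> height x} else {})" for m
  have "(\<Sum>m<n. real (cnt (Suc m)) * (k * (\<Sum>x\<in>X m. k ^ height x)))
         \<le> (\<Sum>t\<in>{t\<in>Tset n. J \<le> height t}. k ^ height t)"
  proof (rule Qw_lower_gen)
    show "0 \<le> k" using kpos by simp
    show "X m \<subseteq> {x \<in> Tset (n - 1 - m). m \<le> height x}" if "m < n" for m
      unfolding X_def by auto
    show "J \<le> height (comb p x)" if "m < n" "p \<in> Tset (Suc m)" "x \<in> X m" for m p x
    proof -
      have "m \<le> J" "J \<le> height x" using that(3) unfolding X_def by (auto split: if_splits)
      then show ?thesis using height_comb_Tset[OF that(2), of x] by simp
    qed
  qed
  then have "(\<Sum>m<n. real (cnt (Suc m)) * (k * (\<Sum>x\<in>X m. k ^ height x))) * g ^ n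
         \<le> qge J n" unfolding qge_def using gpos by (subst mult.commute) (intro mult_left_mono, auto)
  moreover have "(\<Sum>m<n. real (cnt (Suc m)) * (k * (\<Sum>x\<in>X m. k ^ height x))) * g ^ n
     = (\<Sum>m<n. (if m \<le> J then a m * qge J (n - 1 - m) else 0))"
    unfolding sum_distrib_right
    by (intro sum.cong refl) (simp add: a_def qge_def cc_def pow_split X_def)
  ultimately show ?thesis by simp
qed

definition e :: "nat \<Rightarrow> real" where
  "e n = (if n = 0 then 0 else (\<Sum>m<n. a m * q (n - 1 - m)) - q n)"

lemma e_nonneg: "0 \<le> e n"
  unfolding e_def using q_upper[of n] by auto

lemma e_le: "e n \<le> (\<Sum>m<n. a m * min 1 (2 * k ^ m * (4 * g) ^ (n - 1 - m)))"
proof (cases "n = 0")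
  case True then show ?thesis by (simp add: e_def)
next
  case False
  have "e n \<le> (\<Sum>m<n. a m * q (n - 1 - m)) - (\<Sum>m<n. a m * qge m (n - 1 - m))"
    unfolding e_def using False q_lower[of n] by simp
  also have "\<dots> = (\<Sum>m<n. a m * (q (n - 1 - m) - qge m (n - 1 - m)))"
    by (simp add: sum_subtractf algebra_simps)
  also have "\<dots> \<le> (\<Sum>m<n. a m * min 1 (2 * k ^ m * (4 * g) ^ (n - 1 - m)))"
  proof (intro sum_mono mult_left_mono a_nonneg)
    fix m
    have "q (n - 1 - m) - qge m (n - 1 - m) \<le> 1" using q_le1 qge_nonneg by (smt (verit))
    moreover have "q (n - 1 - m) - qge m (n - 1 - m) \<le> 2 * k ^ m * (4 * g) ^ (n - 1 - m)"
      by (rule q_qge)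
    ultimately show "q (n - 1 - m) - qge m (n - 1 - m) \<le> min 1 (2 * k ^ m * (4 * g) ^ (n - 1 - m))"
      by simp
  qed
  finally show ?thesis .
qed

end


lemma pow_powr: "0 < (x::real) \<Longrightarrow> (x ^ m) powr t = (x powr t) ^ m"
proof -
  assume x: "0 < x"
  have "(x ^ m) powr t = (x powr real m) powr t" using x by (simp add: powr_realpow)
  also have "\<dots> = x powr (t * real m)" by (simp add: powr_powr mult.commute)
  also have "\<dots> = (x powr t) powr real m" by (simp add: powr_powr)
  also have "\<dots> = (x powr t) ^ m" using x by (simp add: powr_realpow)
  finally show ?thesis .
qed

context rw
begin

lemma e_decay: "\<exists>C \<theta>. 0 < \<theta> \<and> \<theta> < 1 \<and> (\<forall>n. e n \<le> C * \<theta> ^ n)"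
proof -
  define l where "l = 4 * g"
  have l0: "0 < l" "l < 1" unfolding l_def using gpos g4 by auto
  have lnk: "0 < ln k" using k1 by simp
  have lnl: "ln l < 0" using l0 by simp
  define t where "t = min 1 (ln (1 / l) / (2 * ln k))"
  have t0: "0 < t" "t \<le> 1" unfolding t_def using lnk lnl by (auto simp: ln_div divide_neg_pos)
  have "k powr t \<le> k powr (ln (1 / l) / (2 * ln k))"
    using k1 unfolding t_def by (intro powr_mono) auto
  also have "\<dots> = exp (ln (1 / l) / 2)"
    unfolding powr_def using kpos lnk by (simp add: field_simps)
  finally have kt: "l * k powr t \<le> l * exp (ln (1 / l) / 2)" using l0 by simp
  also have "\<dots> = exp (ln l / 2)"
  proof -
    have "l * exp (ln (1 / l) / 2) = exp (ln l) * exp (- (ln l / 2))" using l0 by (simp add: ln_div)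
    also have "\<dots> = exp (ln l + - (ln l / 2))" by (simp only: exp_add)
    also have "\<dots> = exp (ln l / 2)" by simp
    finally show ?thesis .
  qed
  also have "\<dots> < 1" using lnl by simp
  finally have kt1: "l * k powr t < 1" .
  have "t * ln l < 0" using t0 lnl by (simp add: mult_pos_neg)
  then have lt1: "l powr t < 1" using l0 unfolding powr_def by simp
  define \<eta> where "\<eta> = max (l * k powr t) (l powr t)"
  have "0 < l powr t" using l0 by simp
  then have \<eta>0: "0 < \<eta>" "\<eta> < 1" unfolding \<eta>_def using kt1 lt1 by (auto simp: less_max_iff_disj)
  have trm: "a m * min 1 (2 * k ^ m * l ^ (n - 1 - m)) \<le> 4 * k * l * \<eta> ^ (n - 1)" if "m < n" for m n
  proof -
    have y0: "0 < 2 * k ^ m * l ^ (n - 1 - m)" using kpos l0 by simp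
    have "min 1 (2 * k ^ m * l ^ (n - 1 - m)) \<le> (2 * k ^ m * l ^ (n - 1 - m)) powr t"
      using y0 t0 by (intro min_le_powr) auto
    also have "\<dots> = 2 powr t * (k powr t) ^ m * (l powr t) ^ (n - 1 - m)"
      using kpos l0 by (simp add: powr_mult pow_powr)
    also have "\<dots> \<le> 2 * (k powr t) ^ m * (l powr t) ^ (n - 1 - m)"
    proof -
      have "2 powr t \<le> 2 powr 1" using t0 by (intro powr_mono) auto
      then show ?thesis by (intro mult_right_mono) auto
    qed
    finally have mn: "min 1 (2 * k ^ m * l ^ (n - 1 - m)) \<le> 2 * (k powr t) ^ m * (l powr t) ^ (n - 1 - m)" .
    have "a m * min 1 (2 * k ^ m * l ^ (n - 1 - m)) \<le> (2 * k * l ^ Suc m) * (2 * (k powr t) ^ m * (l powr t) ^ (n - 1 - m))"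
    proof (rule mult_mono)
      show "a m \<le> 2 * k * l ^ Suc m" using a_le[of m] unfolding l_def .
      show "min 1 (2 * k ^ m * l ^ (n - 1 - m)) \<le> 2 * (k powr t) ^ m * (l powr t) ^ (n - 1 - m)" by (rule mn)
      show "0 \<le> 2 * k * l ^ Suc m" using kpos l0 by simp
      show "0 \<le> min 1 (2 * k ^ m * l ^ (n - 1 - m))" using y0 by simp
    qed
    also have "\<dots> = 4 * k * l * ((l * k powr t) ^ m * (l powr t) ^ (n - 1 - m))"
      by (simp add: power_mult_distrib algebra_simps)
    also have "\<dots> \<le> 4 * k * l * (\<eta> ^ m * \<eta> ^ (n - 1 - m))"
    proof (intro mult_left_mono mult_mono power_mono)
      show "l * k powr t \<le> \<eta>" "l powr t \<le> \<eta>" unfolding \<eta>_def by auto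
      show "0 \<le> l * k powr t" "0 \<le> l powr t" using l0 kpos by auto
      show "0 \<le> \<eta> ^ m" "0 \<le> (l powr t) ^ (n - 1 - m)" using \<eta>0 l0 by auto
      show "0 \<le> 4 * k * l" using kpos l0 by auto
    qed
    also have "\<eta> ^ m * \<eta> ^ (n - 1 - m) = \<eta> ^ (n - 1)"
      using that by (simp flip: power_add)
    finally show ?thesis .
  qed
  obtain C where C: "\<forall>n. real n * \<eta> ^ n \<le> C * ((1 + \<eta>) / 2) ^ n" using n_geom_bound[OF \<eta>0] by blast
  have "e n \<le> (4 * k * l / \<eta> * C) * ((1 + \<eta>) / 2) ^ n" for n
  proof (cases n)
    case 0
    have "0 \<le> C" using C[rule_format, of 0] by simp
    then show ?thesis using 0 kpos l0 \<eta>0 by (simp add: e_def)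
  next
    case (Suc n')
    have "e n \<le> (\<Sum>m<n. a m * min 1 (2 * k ^ m * l ^ (n - 1 - m)))" using e_le unfolding l_def .
    also have "\<dots> \<le> (\<Sum>m<n. 4 * k * l * \<eta> ^ (n - 1))" by (intro sum_mono trm) simp
    also have "\<dots> = 4 * k * l / \<eta> * (real n * \<eta> ^ n)" using Suc \<eta>0 by (simp add: field_simps)
    also have "\<dots> \<le> 4 * k * l / \<eta> * (C * ((1 + \<eta>) / 2) ^ n)"
      using C kpos l0 \<eta>0 by (intro mult_left_mono) auto
    finally show ?thesis by simp
  qed
  moreover have "0 < (1 + \<eta>) / 2" "(1 + \<eta>) / 2 < 1" using \<eta>0 by auto
  ultimately show ?thesis by blast
qed

end


lemma geom_tail:
  fixes f :: "nat \<Rightarrow> 'a::banach" and K \<zeta> :: real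
  assumes f: "\<And>n. norm (f n) \<le> K * \<zeta> ^ n" and \<zeta>: "0 \<le> \<zeta>" "\<zeta> < 1"
  shows "summable f" "norm (suminf f - (\<Sum>j<n. f j)) \<le> K * \<zeta> ^ n / (1 - \<zeta>)"
proof -
  have gs: "summable (\<lambda>j. K * \<zeta> ^ j)" using \<zeta> by (intro summable_mult summable_geometric) auto
  show sf: "summable f" by (rule summable_comparison_test'[OF gs]) (use f in auto)
  have "summable (\<lambda>j. (K * \<zeta> ^ n) * \<zeta> ^ j)" using \<zeta> by (intro summable_mult summable_geometric) auto
  then have gs2: "summable (\<lambda>j. K * \<zeta> ^ (j + n))" by (simp add: power_add mult_ac)
  have sn: "summable (\<lambda>j. norm (f (j + n)))"
    by (rule summable_comparison_test'[OF gs2]) (use f in auto)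
  have "suminf f - (\<Sum>j<n. f j) = (\<Sum>j. f (j + n))"
    using suminf_split_initial_segment[OF sf, of n] by simp
  then have "norm (suminf f - (\<Sum>j<n. f j)) \<le> (\<Sum>j. norm (f (j + n)))"
    using summable_norm[OF sn] by simp
  also have "\<dots> \<le> (\<Sum>j. K * \<zeta> ^ (j + n))"
    by (intro suminf_le sn gs2) (use f in auto)
  also have "\<dots> = (\<Sum>j. (K * \<zeta> ^ n) * \<zeta> ^ j)" by (simp add: power_add mult_ac)
  also have "\<dots> = (K * \<zeta> ^ n) * (1 / (1 - \<zeta>))"
    using \<zeta> by (simp add: suminf_mult suminf_geometric summable_geometric)
  also have "\<dots> = K * \<zeta> ^ n / (1 - \<zeta>)" by simp
  finally show "norm (suminf f - (\<Sum>j<n. f j)) \<le> K * \<zeta> ^ n / (1 - \<zeta>)" .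
qed

context rw
begin

definition Ac :: "complex fps" where
  "Ac = Abs_fps (\<lambda>n. if n = 0 then 0 else of_real (a (n - 1)))"

definition bb :: "nat \<Rightarrow> real" where "bb n = 1 - (\<Sum>m<n. a m)"

definition Bc :: "complex fps" where "Bc = Abs_fps (\<lambda>n. of_real (bb n))"

definition R0 :: real where "R0 = 1 / (4 * g)"

lemma R0_gt1: "1 < R0" unfolding R0_def using g4 gpos by (simp add: field_simps)

lemma bb_tail: "bb n = (\<Sum>m. a (m + n))"
  using suminf_split_initial_segment[OF a_summable, of n] a_sums unfolding bb_def
  by (simp add: sums_iff)

lemma bb_nonneg: "0 \<le> bb n" unfolding bb_tail
  by (intro suminf_nonneg) (auto simp: summable_iff_shift a_summable a_nonneg)

definition lam :: real where "lam = 4 * g"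

lemma lam0: "0 < lam" "lam < 1" unfolding lam_def using gpos g4 by auto

lemma a_le': "a m \<le> 2 * k * lam ^ Suc m" unfolding lam_def by (rule a_le)

lemma bb_le: "bb n \<le> (2 * k * lam / (1 - lam)) * lam ^ n"
proof -
  have gs0: "summable (\<lambda>m. (2 * k * lam ^ Suc n) * lam ^ m)"
    using lam0 by (intro summable_mult summable_geometric) auto
  have eq: "(2 * k * lam ^ Suc n) * lam ^ m = 2 * k * lam ^ Suc (m + n)" for m
    by (simp add: power_add mult_ac)
  have gs: "summable (\<lambda>m. 2 * k * lam ^ Suc (m + n))" using gs0 unfolding eq .
  have "bb n \<le> (\<Sum>m. 2 * k * lam ^ Suc (m + n))"
    unfolding bb_tail by (intro suminf_le gs a_le') (simp add: summable_iff_shift a_summable)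
  also have "\<dots> = (\<Sum>m. (2 * k * lam ^ Suc n) * lam ^ m)" unfolding eq ..
  also have "\<dots> = (2 * k * lam ^ Suc n) * (1 / (1 - lam))"
    using lam0 by (simp add: suminf_mult suminf_geometric summable_geometric)
  also have "\<dots> = (2 * k * lam / (1 - lam)) * lam ^ n" by (simp add: field_simps)
  finally show ?thesis .
qed

lemma conv_radius_bound:
  fixes F :: "complex fps" and C :: real
  assumes "\<And>n. norm (fps_nth F n) \<le> C * (4 * g) ^ n"
  shows "ereal R0 \<le> fps_conv_radius F"
  unfolding fps_conv_radius_def
proof (rule conv_radius_geI_ex')
  fix r :: real assume r: "0 < r" "ereal r < ereal R0"
  have rg: "0 \<le> 4 * g * r" "4 * g * r < 1" using r gpos unfolding R0_def by (auto simp: field_simps)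
  have gs: "summable (\<lambda>n. C * (4 * g * r) ^ n)" using rg by (intro summable_mult summable_geometric) auto
  show "summable (\<lambda>n. fps_nth F n * of_real r ^ n)"
  proof (rule summable_comparison_test'[OF gs])
    fix n
    have "norm (fps_nth F n * of_real r ^ n) = norm (fps_nth F n) * r ^ n" using r by (simp add: norm_mult norm_power)
    also have "\<dots> \<le> C * (4 * g) ^ n * r ^ n" using r assms by (intro mult_right_mono) auto
    finally show "norm (fps_nth F n * of_real r ^ n) \<le> C * (4 * g * r) ^ n" by (simp add: power_mult_distrib)
  qed
qed

lemma Ac_radius: "ereal R0 \<le> fps_conv_radius Ac"
proof (rule conv_radius_bound)
  fix n
  show "norm (fps_nth Ac n) \<le> (2 * k) * (4 * g) ^ n"
  proof (cases n)
    case 0 then show ?thesis using kpos gpos by (simp add: Ac_def)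
  next
    case (Suc m)
    then show ?thesis using a_le[of m] a_nonneg[of m] by (simp add: Ac_def)
  qed
qed

lemma Bc_radius: "ereal R0 \<le> fps_conv_radius Bc"
proof (rule conv_radius_bound[of _ "2 * k * lam / (1 - lam)"])
  fix n
  have "norm (fps_nth Bc n) = bb n" using bb_nonneg[of n] by (simp add: Bc_def)
  also have "\<dots> \<le> (2 * k * lam / (1 - lam)) * lam ^ n" by (rule bb_le)
  finally show "norm (fps_nth Bc n) \<le> 2 * k * lam / (1 - lam) * (4 * g) ^ n" by (simp add: lam_def)
qed

lemma one_minus_X_Bc: "(1 - fps_X) * Bc = 1 - Ac"
proof (rule fps_ext)
  fix n
  show "fps_nth ((1 - fps_X) * Bc) n = fps_nth (1 - Ac) n"
  proof (cases n)
    case 0 then show ?thesis by (simp add: Bc_def Ac_def bb_def)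
  next
    case (Suc m)
    have "(1 - fps_X) * Bc = Bc - fps_X * Bc" by (simp add: algebra_simps)
    then have "fps_nth ((1 - fps_X) * Bc) n = of_real (bb (Suc m)) - of_real (bb m)"
      using Suc by (simp add: fps_X_mult_nth Bc_def)
    also have "\<dots> = - of_real (a m)" by (simp add: bb_def)
    finally show ?thesis using Suc by (simp add: Ac_def)
  qed
qed

lemma radius_1mX: "fps_conv_radius (1 - fps_X :: complex fps) = \<infinity>"
proof -
  have "\<infinity> \<le> fps_conv_radius (1 - fps_X :: complex fps)"
    using fps_conv_radius_diff[of "1 :: complex fps" fps_X] by simp
  then show ?thesis by (simp add: top_unique[symmetric])
qed

lemma eval_rel:
  assumes "norm z < R0"
  shows "(1 - z) * eval_fps Bc z = 1 - eval_fps Ac z"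
proof -
  have zB: "ereal (norm z) < fps_conv_radius Bc" by (rule less_le_trans[OF _ Bc_radius]) (simp add: assms)
  have zA: "ereal (norm z) < fps_conv_radius Ac" by (rule less_le_trans[OF _ Ac_radius]) (simp add: assms)
  have "eval_fps ((1 - fps_X) * Bc) z = eval_fps (1 - fps_X) z * eval_fps Bc z"
    using zB by (intro eval_fps_mult) (auto simp: radius_1mX)
  also have "eval_fps (1 - fps_X) z = 1 - z"
    by (subst eval_fps_diff) auto
  finally have "eval_fps ((1 - fps_X) * Bc) z = (1 - z) * eval_fps Bc z" .
  moreover have "eval_fps (1 - Ac) z = 1 - eval_fps Ac z"
    using zA by (subst eval_fps_diff) auto
  ultimately show ?thesis using one_minus_X_Bc by simp
qed

lemma eval_Ac_sums:
  assumes "norm z < R0"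
  shows "(\<lambda>n. of_real (a n) * z ^ Suc n) sums eval_fps Ac z"
proof -
  have zA: "ereal (norm z) < fps_conv_radius Ac" by (rule less_le_trans[OF _ Ac_radius]) (simp add: assms)
  have "(\<lambda>n. fps_nth Ac n * z ^ n) sums eval_fps Ac z" by (rule sums_eval_fps[OF zA])
  then have "(\<lambda>n. fps_nth Ac (Suc n) * z ^ Suc n) sums (eval_fps Ac z - fps_nth Ac 0 * z ^ 0)"
    using sums_Suc_iff[of "\<lambda>n. fps_nth Ac n * z ^ n"] by simp
  then show ?thesis by (simp add: Ac_def)
qed

lemma A_ne1:
  assumes "norm z \<le> 1" "z \<noteq> 1"
  shows "eval_fps Ac z \<noteq> 1"
proof
  assume A1: "eval_fps Ac z = 1"
  have "norm z < R0" using assms R0_gt1 by simp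
  then have s: "(\<lambda>n. of_real (a n) * z ^ Suc n) sums 1" using eval_Ac_sums[of z] A1 by simp
  then have sR: "(\<lambda>n. a n * Re (z ^ Suc n)) sums 1"
    using sums_Re[OF s] by simp
  have "(\<lambda>n. a n - a n * Re (z ^ Suc n)) sums (1 - 1)" by (intro sums_diff a_sums sR)
  then have s0: "(\<lambda>n. a n * (1 - Re (z ^ Suc n))) sums 0" by (simp add: algebra_simps)
  have nn: "0 \<le> a n * (1 - Re (z ^ Suc n))" for n
  proof -
    have "Re (z ^ Suc n) \<le> norm (z ^ Suc n)" by (rule complex_Re_le_cmod)
    also have "\<dots> \<le> 1" unfolding norm_power using assms(1) by (intro power_le_one) auto
    finally show ?thesis using a_nonneg by simp
  qed
  have "\<forall>n. a n * (1 - Re (z ^ Suc n)) = 0"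
    using suminf_eq_zero_iff[OF sums_summable[OF s0] nn] s0 by (simp add: sums_iff)
  then have "a 0 * (1 - Re (z ^ Suc 0)) = 0" by blast
  then have "a 0 * (1 - Re z) = 0" by simp
  then have Rz: "Re z = 1" using a0_pos by simp
  have "(cmod z)^2 \<le> 1" using assms(1) norm_ge_zero[of z] by (simp add: power_le_one)
  then have "(Re z)^2 + (Im z)^2 \<le> 1" by (simp add: cmod_power2)
  then have "Im z = 0" using Rz by simp
  then have "z = 1" using Rz by (simp add: complex_eq_iff)
  then show False using assms(2) by simp
qed

lemma bb_summable: "summable bb"
  using geom_tail(1)[of bb "2 * k * lam / (1 - lam)" lam] bb_le bb_nonneg lam0 by simp

definition B1 :: real where "B1 = suminf bb"

lemma B1_pos: "0 < B1"
proof -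
  have "bb 0 \<le> B1" unfolding B1_def using sum_le_suminf[OF bb_summable, of "{0}"] bb_nonneg by simp
  then show ?thesis by (simp add: bb_def)
qed

lemma eval_Bc_1: "eval_fps Bc 1 = of_real B1"
proof -
  have "norm (1::complex) < R0" using R0_gt1 by simp
  then have "ereal (norm (1::complex)) < fps_conv_radius Bc" by (intro less_le_trans[OF _ Bc_radius]) simp
  then have "(\<lambda>n. fps_nth Bc n * 1 ^ n) sums eval_fps Bc 1" by (rule sums_eval_fps)
  moreover have "(\<lambda>n. of_real (bb n) :: complex) sums of_real B1"
    unfolding sums_of_real_iff B1_def using bb_summable by (rule summable_sums)
  ultimately show ?thesis by (simp add: Bc_def sums_unique2)
qed

lemma B_ne0_disc:
  assumes "norm z \<le> 1"
  shows "eval_fps Bc z \<noteq> 0"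
proof (cases "z = 1")
  case True then show ?thesis using eval_Bc_1 B1_pos by simp
next
  case False
  have "norm z < R0" using assms R0_gt1 by simp
  then have "(1 - z) * eval_fps Bc z = 1 - eval_fps Ac z" by (rule eval_rel)
  moreover have "1 - eval_fps Ac z \<noteq> 0" using A_ne1[OF assms False] by simp
  ultimately show ?thesis by auto
qed

end


context rw
begin

lemma rho_exists: "\<exists>\<rho>>1. \<rho> < R0 \<and> (\<forall>z. norm z < \<rho> \<longrightarrow> eval_fps Bc z \<noteq> 0)"
proof -
  define R1 where "R1 = (1 + R0) / 2"
  have R1: "1 < R1" "R1 < R0" unfolding R1_def using R0_gt1 by auto
  have sub: "cball (0::complex) R1 \<subseteq> eball 0 (fps_conv_radius Bc)"
  proof
    fix z :: complex assume "z \<in> cball 0 R1"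
    then have "norm z < R0" using R1 by simp
    then have "ereal (norm z) < fps_conv_radius Bc" by (intro less_le_trans[OF _ Bc_radius]) simp
    then show "z \<in> eball 0 (fps_conv_radius Bc)" by simp
  qed
  have cont: "continuous_on (cball (0::complex) R1) (eval_fps Bc)"
    by (rule continuous_on_subset[OF continuous_on_eval_fps sub])
  define S where "S = {z \<in> cball 0 R1. eval_fps Bc z = 0}"
  have clS: "closed S" unfolding S_def by (rule continuous_closed_preimage_constant[OF cont closed_cball])
  have "compact (cball 0 R1 \<inter> S)" by (rule compact_Int_closed[OF compact_cball clS])
  moreover have "cball 0 R1 \<inter> S = S" unfolding S_def by auto
  ultimately have cS: "compact S" by simp
  show ?thesis
  proof (cases "S = {}")
    case True
    have "\<forall>z. norm z < R1 \<longrightarrow> eval_fps Bc z \<noteq> 0" using True unfolding S_def by auto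
    then show ?thesis using R1 by blast
  next
    case False
    obtain z0 where z0: "z0 \<in> S" "\<forall>y\<in>S. norm z0 \<le> norm y"
      using continuous_attains_inf[OF cS False, of norm] continuous_on_norm[OF continuous_on_id] by auto
    have "1 < norm z0"
    proof (rule ccontr)
      assume "\<not> 1 < norm z0"
      then have "eval_fps Bc z0 \<noteq> 0" using B_ne0_disc by simp
      then show False using z0(1) unfolding S_def by simp
    qed
    define \<rho> where "\<rho> = min R1 (norm z0)"
    have "\<forall>z. norm z < \<rho> \<longrightarrow> eval_fps Bc z \<noteq> 0"
    proof (intro allI impI)
      fix z :: complex assume z: "norm z < \<rho>"
      show "eval_fps Bc z \<noteq> 0"
      proof
        assume "eval_fps Bc z = 0"
        then have "z \<in> S" using z unfolding S_def \<rho>_def by auto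
        then have "norm z0 \<le> norm z" using z0 by auto
        then show False using z unfolding \<rho>_def by auto
      qed
    qed
    moreover have "1 < \<rho>" "\<rho> < R0" unfolding \<rho>_def using R1 \<open>1 < norm z0\<close> by auto
    ultimately show ?thesis by blast
  qed
qed

definition beta :: "nat \<Rightarrow> complex" where "beta n = fps_nth (inverse Bc) n"

definition Uinf :: complex where "Uinf = inverse (of_real B1)"

lemma beta_props: "\<exists>K \<zeta>. 0 \<le> K \<and> 0 < \<zeta> \<and> \<zeta> < 1 \<and> (\<forall>n. norm (beta n) \<le> K * \<zeta> ^ n) \<and> beta sums Uinf"
proof -
  obtain \<rho> where \<rho>: "1 < \<rho>" "\<rho> < R0" "\<forall>z. norm z < \<rho> \<longrightarrow> eval_fps Bc z \<noteq> 0"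
    using rho_exists by blast
  have nz: "\<And>z. ereal (norm z) < ereal \<rho> \<Longrightarrow> eval_fps Bc z \<noteq> 0" using \<rho>(3) by simp
  have "min (ereal \<rho>) (fps_conv_radius Bc) \<le> fps_conv_radius (inverse Bc)"
    by (rule fps_conv_radius_inverse[OF nz])
  moreover have "ereal \<rho> \<le> fps_conv_radius Bc" using Bc_radius \<rho>(2) by (meson ereal_less_eq(3) less_imp_le order_trans)
  ultimately have rad: "ereal \<rho> \<le> fps_conv_radius (inverse Bc)" by simp
  define R2 where "R2 = (1 + \<rho>) / 2"
  have R2: "1 < R2" "R2 < \<rho>" unfolding R2_def using \<rho> by auto
  have "ereal (norm (of_real R2 :: complex)) < fps_conv_radius (inverse Bc)"
    using R2 rad by (intro less_le_trans[OF _ rad]) simp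
  then have "summable (\<lambda>n. beta n * of_real R2 ^ n)"
    unfolding beta_def fps_conv_radius_def by (rule summable_in_conv_radius)
  then have "Bseq (\<lambda>n. beta n * of_real R2 ^ n)" by (rule summable_imp_Bseq)
  then obtain K where K: "0 < K" "\<forall>n. norm (beta n * of_real R2 ^ n) \<le> K" by (auto elim: BseqE)
  have bd: "norm (beta n) \<le> K * (1 / R2) ^ n" for n
  proof -
    have "norm (beta n) * R2 ^ n \<le> K" using K(2)[rule_format, of n] R2 by (simp add: norm_mult norm_power)
    then show ?thesis using R2 by (simp add: field_simps power_one_over)
  qed
  have "ereal (norm (1::complex)) < fps_conv_radius (inverse Bc)"
    using \<rho> by (intro less_le_trans[OF _ rad]) simp
  then have s: "(\<lambda>n. beta n * 1 ^ n) sums eval_fps (inverse Bc) 1"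
    unfolding beta_def by (rule sums_eval_fps)
  have "eval_fps (inverse Bc) 1 = inverse (eval_fps Bc 1)"
  proof (rule eval_fps_inverse[OF nz])
    show "ereal (norm (1::complex)) < fps_conv_radius Bc" by (intro less_le_trans[OF _ Bc_radius]) (use R0_gt1 in simp)
    show "ereal (norm (1::complex)) < ereal \<rho>" using \<rho> by simp
  qed
  then have "beta sums Uinf" using s unfolding Uinf_def eval_Bc_1 by simp
  moreover have "0 < 1 / R2" "1 / R2 < 1" using R2 by auto
  ultimately show ?thesis using bd K(1) by (intro exI[of _ K] exI[of _ "1 / R2"]) auto
qed

definition Uc :: "complex fps" where "Uc = inverse (1 - Ac)"

lemma Uc_nth: "fps_nth Uc n = (\<Sum>j\<le>n. beta j)"
proof -
  have "Uc = inverse ((1 - fps_X) * Bc)" unfolding Uc_def one_minus_X_Bc ..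
  also have "\<dots> = inverse Bc * inverse (1 - fps_X)" by (simp add: fps_inverse_mult mult.commute)
  also have "inverse (1 - fps_X) = (Abs_fps (\<lambda>n. 1) :: complex fps)" by (rule fps_inverse_one_minus_fps_X)
  finally have "Uc = inverse Bc * Abs_fps (\<lambda>n. 1)" .
  then show ?thesis by (simp add: fps_mult_nth beta_def atLeast0AtMost)
qed

lemma Ac0: "fps_nth Ac 0 = 0" by (simp add: Ac_def)

lemma Uc_rel: "Uc * (1 - Ac) = 1"
  unfolding Uc_def by (rule inverse_mult_eq_1) (simp add: Ac0)

definition Qc :: "complex fps" where "Qc = Abs_fps (\<lambda>n. of_real (q n))"
definition Ec :: "complex fps" where "Ec = Abs_fps (\<lambda>n. of_real (e n))"

lemma sum_rev_conv: "(\<Sum>j<n. f j * h (n - 1 - j)) = (\<Sum>i<n. f (n - 1 - i) * h i)"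
  for f h :: "nat \<Rightarrow> real"
proof -
  have "(\<Sum>i<n. f (n - 1 - i) * h i) = (\<Sum>j<n. (\<lambda>i. f (n - 1 - i) * h i) (n - Suc j))"
    by (rule sum.nat_diff_reindex[symmetric])
  also have "\<dots> = (\<Sum>j<n. f j * h (n - 1 - j))"
    by (intro sum.cong refl) (simp add: Suc_diff_Suc)
  finally show ?thesis by simp
qed

lemma Qc_rel: "Qc * (1 - Ac) = 1 - Ec"
proof (rule fps_ext)
  fix n
  show "fps_nth (Qc * (1 - Ac)) n = fps_nth (1 - Ec) n"
  proof (cases n)
    case 0 then show ?thesis by (simp add: Qc_def Ec_def Ac_def q0 e_def)
  next
    case (Suc m)
    have "fps_nth (Qc * (1 - Ac)) n = (\<Sum>i=0..Suc m. of_real (q i) * fps_nth (1 - Ac) (Suc m - i))"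
      using Suc by (simp add: fps_mult_nth Qc_def)
    also have "\<dots> = (\<Sum>i=0..m. of_real (q i) * fps_nth (1 - Ac) (Suc m - i)) + of_real (q (Suc m))"
      by (simp add: Ac0)
    also have "(\<Sum>i=0..m. of_real (q i) * fps_nth (1 - Ac) (Suc m - i)) = (\<Sum>i=0..m. - of_real (q i * a (m - i)))"
      by (intro sum.cong refl) (auto simp: Ac_def Suc_diff_le)
    also have "\<dots> = - of_real (\<Sum>i<Suc m. q i * a (Suc m - 1 - i))"
      by (simp add: atLeast0AtMost lessThan_Suc_atMost sum_negf)
    also have "(\<Sum>i<Suc m. q i * a (Suc m - 1 - i)) = (\<Sum>j<Suc m. a j * q (Suc m - 1 - j))"
      using sum_rev_conv[of a q "Suc m"] by (simp add: mult.commute)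
    finally have "fps_nth (Qc * (1 - Ac)) n = of_real (q n) - of_real (\<Sum>j<n. a j * q (n - 1 - j))"
      using Suc by simp
    also have "\<dots> = - of_real (e n)" using Suc by (simp add: e_def)
    finally show ?thesis using Suc by (simp add: Ec_def)
  qed
qed

definition eps :: "nat \<Rightarrow> complex" where "eps i = fps_nth (1 - Ec) i"

lemma q_conv: "of_real (q n) = (\<Sum>i\<le>n. eps i * fps_nth Uc (n - i))"
proof -
  have "Qc = Qc * (Uc * (1 - Ac))" using Uc_rel by simp
  also have "\<dots> = (Qc * (1 - Ac)) * Uc" by (simp add: mult_ac)
  also have "\<dots> = (1 - Ec) * Uc" by (simp add: Qc_rel)
  finally have "fps_nth Qc n = fps_nth ((1 - Ec) * Uc) n" by simp
  then show ?thesis by (simp add: fps_mult_nth Qc_def eps_def atLeast0AtMost)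
qed

end


context rw
begin

lemma eps_bound: "\<exists>Ce \<theta>. 1 \<le> Ce \<and> 0 < \<theta> \<and> \<theta> < 1 \<and> (\<forall>i. norm (eps i) \<le> Ce * \<theta> ^ i)"
proof -
  obtain C \<theta> where C: "0 < \<theta>" "\<theta> < 1" "\<forall>n. e n \<le> C * \<theta> ^ n" using e_decay by blast
  define Ce where "Ce = max 1 C"
  have "norm (eps i) \<le> Ce * \<theta> ^ i" for i
  proof (cases i)
    case 0 then show ?thesis by (simp add: eps_def Ec_def e_def Ce_def)
  next
    case (Suc j)
    have "norm (eps i) = e i" using Suc e_nonneg[of i] by (simp add: eps_def Ec_def)
    also have "\<dots> \<le> C * \<theta> ^ i" using C by simp
    also have "\<dots> \<le> Ce * \<theta> ^ i" unfolding Ce_def using C by (intro mult_right_mono) auto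
    finally show ?thesis .
  qed
  then show ?thesis using C unfolding Ce_def by (intro exI[of _ "max 1 C"] exI[of _ \<theta>]) auto
qed

lemma q_asym: "\<exists>L C \<theta>. 0 < \<theta> \<and> \<theta> < 1 \<and> (\<forall>n. \<bar>q n - L\<bar> \<le> C * \<theta> ^ n)"
proof -
  obtain K \<zeta> where B: "0 \<le> K" "0 < \<zeta>" "\<zeta> < 1" "\<forall>n. norm (beta n) \<le> K * \<zeta> ^ n" "beta sums Uinf"
    using beta_props by blast
  obtain Ce \<theta> where E: "1 \<le> Ce" "0 < \<theta>" "\<theta> < 1" "\<forall>i. norm (eps i) \<le> Ce * \<theta> ^ i"
    using eps_bound by blast
  have Ubd: "norm (fps_nth Uc j - Uinf) \<le> (K / (1 - \<zeta>)) * \<zeta> ^ j" for j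
  proof -
    have "norm (suminf beta - (\<Sum>i<Suc j. beta i)) \<le> K * \<zeta> ^ Suc j / (1 - \<zeta>)"
      using geom_tail(2)[of beta K \<zeta> "Suc j"] B by auto
    also have "\<dots> \<le> K * \<zeta> ^ j / (1 - \<zeta>)"
    proof -
      have "\<zeta> ^ Suc j \<le> \<zeta> ^ j" using B by (simp add: mult_left_le_one_le)
      then show ?thesis using B by (intro divide_right_mono mult_left_mono) auto
    qed
    also have "\<dots> = (K / (1 - \<zeta>)) * \<zeta> ^ j" by simp
    finally show ?thesis using B(5) unfolding Uc_nth by (simp add: sums_iff lessThan_Suc_atMost norm_minus_commute)
  qed
  have es: "summable eps" using geom_tail(1)[of eps Ce \<theta>] E by auto
  define Es where "Es = suminf eps"
  have Ebd: "norm ((\<Sum>i\<le>n. eps i) - Es) \<le> (Ce / (1 - \<theta>)) * \<theta> ^ n" for n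
  proof -
    have "norm (Es - (\<Sum>i<Suc n. eps i)) \<le> Ce * \<theta> ^ Suc n / (1 - \<theta>)"
      unfolding Es_def using geom_tail(2)[of eps Ce \<theta> "Suc n"] E by auto
    also have "\<dots> \<le> Ce * \<theta> ^ n / (1 - \<theta>)"
    proof -
      have "\<theta> ^ Suc n \<le> \<theta> ^ n" using E by (simp add: mult_left_le_one_le)
      then show ?thesis using E by (intro divide_right_mono mult_left_mono) auto
    qed
    also have "\<dots> = (Ce / (1 - \<theta>)) * \<theta> ^ n" by simp
    finally show ?thesis by (simp add: lessThan_Suc_atMost norm_minus_commute)
  qed
  define \<eta> where "\<eta> = max \<zeta> \<theta>"
  have \<eta>: "0 < \<eta>" "\<eta> < 1" unfolding \<eta>_def using B E by auto
  define L where "L = Uinf * Es"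
  define Ku where "Ku = K / (1 - \<zeta>)"
  have Ku: "0 \<le> Ku" unfolding Ku_def using B by simp
  have main: "norm (of_real (q n) - L) \<le> (Ce * Ku) * (real n * \<eta> ^ n) + (Ce * Ku + norm Uinf * (Ce / (1 - \<theta>))) * \<eta> ^ n" for n
  proof -
    have "of_real (q n) - L = (\<Sum>i\<le>n. eps i * (fps_nth Uc (n - i) - Uinf)) + Uinf * ((\<Sum>i\<le>n. eps i) - Es)"
      unfolding q_conv L_def by (simp add: algebra_simps sum_subtractf sum_distrib_left sum_distrib_right)
    then have "norm (of_real (q n) - L) \<le> norm (\<Sum>i\<le>n. eps i * (fps_nth Uc (n - i) - Uinf)) + norm (Uinf * ((\<Sum>i\<le>n. eps i) - Es))"
      by (simp add: norm_triangle_ineq)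
    also have "norm (\<Sum>i\<le>n. eps i * (fps_nth Uc (n - i) - Uinf)) \<le> (\<Sum>i\<le>n. (Ce * Ku) * \<eta> ^ n)"
    proof -
      have "norm (\<Sum>i\<le>n. eps i * (fps_nth Uc (n - i) - Uinf)) \<le> (\<Sum>i\<le>n. norm (eps i * (fps_nth Uc (n - i) - Uinf)))"
        by (rule norm_sum)
      also have "\<dots> \<le> (\<Sum>i\<le>n. (Ce * Ku) * \<eta> ^ n)"
      proof (intro sum_mono)
        fix i assume i: "i \<in> {..n}"
        have "norm (eps i * (fps_nth Uc (n - i) - Uinf)) \<le> (Ce * \<theta> ^ i) * (Ku * \<zeta> ^ (n - i))"
          unfolding norm_mult using E Ubd[of "n - i"] unfolding Ku_def
          by (intro mult_mono) auto
        also have "\<dots> \<le> (Ce * \<eta> ^ i) * (Ku * \<eta> ^ (n - i))"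
          using E B Ku unfolding \<eta>_def by (intro mult_mono mult_left_mono power_mono) auto
        also have "\<dots> = (Ce * Ku) * \<eta> ^ n" using i by (simp add: mult_ac flip: power_add)
        finally show "norm (eps i * (fps_nth Uc (n - i) - Uinf)) \<le> (Ce * Ku) * \<eta> ^ n" .
      qed
      finally show ?thesis .
    qed
    also have "norm (Uinf * ((\<Sum>i\<le>n. eps i) - Es)) \<le> norm Uinf * ((Ce / (1 - \<theta>)) * \<eta> ^ n)"
    proof -
      have "(Ce / (1 - \<theta>)) * \<theta> ^ n \<le> (Ce / (1 - \<theta>)) * \<eta> ^ n"
        using E unfolding \<eta>_def by (intro mult_left_mono power_mono) auto
      then show ?thesis unfolding norm_mult using Ebd[of n] by (intro mult_left_mono) auto
    qed
    finally show ?thesis by (simp add: algebra_simps)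
  qed
  obtain C1 where C1: "\<forall>n. real n * \<eta> ^ n \<le> C1 * ((1 + \<eta>) / 2) ^ n" using n_geom_bound[OF \<eta>] by blast
  define \<eta>' where "\<eta>' = (1 + \<eta>) / 2"
  have \<eta>': "0 < \<eta>'" "\<eta>' < 1" "\<eta> \<le> \<eta>'" unfolding \<eta>'_def using \<eta> by auto
  define C2 where "C2 = Ce * Ku + norm Uinf * (Ce / (1 - \<theta>))"
  have C2: "0 \<le> C2" unfolding C2_def using E Ku by auto
  have "\<bar>q n - Re L\<bar> \<le> (Ce * Ku * C1 + C2) * \<eta>' ^ n" for n
  proof -
    have "\<bar>q n - Re L\<bar> = \<bar>Re (of_real (q n) - L)\<bar>" by simp
    also have "\<dots> \<le> norm (of_real (q n) - L)" by (rule abs_Re_le_cmod)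
    also have "\<dots> \<le> (Ce * Ku) * (real n * \<eta> ^ n) + C2 * \<eta> ^ n" using main unfolding C2_def .
    also have "\<dots> \<le> (Ce * Ku) * (C1 * \<eta>' ^ n) + C2 * \<eta>' ^ n"
      using C1 E Ku C2 \<eta> \<eta>' unfolding \<eta>'_def by (intro add_mono mult_left_mono power_mono) auto
    finally show ?thesis by (simp add: algebra_simps)
  qed
  then show ?thesis using \<eta>' by blast
qed

end


fun ptpath :: "nat \<Rightarrow> ptree" where
  "ptpath 0 = Node []"
| "ptpath (Suc n) = Node [ptpath n]"

lemma edges_ptpath: "edges (ptpath n) = n" by (induction n) auto
lemma height_ptpath: "height (ptpath n) = n" by (induction n) auto

context rw
begin

lemma qge_path_pos: "0 < qge J J"
proof -
  have "k ^ height (ptpath J) \<le> (\<Sum>t\<in>{t\<in>Tset J. J \<le> height t}. k ^ height t)"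
    using finite_Tset kpos by (intro member_le_sum) (auto simp: Tset_def edges_ptpath height_ptpath)
  moreover have "0 < k ^ height (ptpath J)" using kpos by simp
  ultimately have "0 < (\<Sum>t\<in>{t\<in>Tset J. J \<le> height t}. k ^ height t)"
    by (rule_tac less_le_trans) auto
  then show ?thesis unfolding qge_def using gpos by simp
qed

lemma q_lim_pos: "\<exists>L C \<theta>. 0 < L \<and> 0 < \<theta> \<and> \<theta> < 1 \<and> (\<forall>n. \<bar>q n - L\<bar> \<le> C * \<theta> ^ n)"
proof -
  obtain L C \<theta> where A: "0 < \<theta>" "\<theta> < 1" "\<forall>n. \<bar>q n - L\<bar> \<le> C * \<theta> ^ n" using q_asym by blast
  have lim0: "(\<lambda>n. C * \<theta> ^ n) \<longlonglongrightarrow> 0" using A by (intro tendsto_mult_right_zero LIMSEQ_power_zero) auto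
  have "(\<lambda>n. q n - L) \<longlonglongrightarrow> 0"
    by (rule Lim_null_comparison[OF _ lim0]) (use A in auto)
  then have qlim: "q \<longlonglongrightarrow> L" by (simp add: LIM_zero_iff)
  have L0: "0 \<le> L" using qlim q_nonneg by (intro LIMSEQ_le_const) auto
  have "L \<noteq> 0"
  proof
    assume L: "L = 0"
    have qb: "q n \<le> C * \<theta> ^ n" for n using A(3)[rule_format, of n] L q_nonneg[of n] by simp
    define x where "x = 2 / (1 + \<theta>)"
    have x: "1 < x" "x * \<theta> < 1" "0 < x" unfolding x_def using A by (auto simp: field_simps)
    have "(\<lambda>N. \<Sum>m<N. a m) \<longlonglongrightarrow> 1" using a_sums by (simp add: sums_def)
    moreover have "1 / x < 1" using x by simp
    ultimately have "\<forall>\<^sub>F N in sequentially. 1 / x < (\<Sum>m<N. a m)" by (rule order_tendstoD)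
    then obtain J where J: "1 / x < (\<Sum>m<J. a m)" by (auto simp: eventually_sequentially)
    have aJ: "1 < x * (\<Sum>m\<le>J. a m)"
    proof -
      have "(\<Sum>m<J. a m) \<le> (\<Sum>m\<le>J. a m)" using a_nonneg by (intro sum_mono2) auto
      then have "1 / x < (\<Sum>m\<le>J. a m)" using J by simp
      then show ?thesis using x by (simp add: field_simps)
    qed
    define \<phi> where "\<phi> n = qge J n" for n
    have \<phi>0: "0 \<le> \<phi> n" for n unfolding \<phi>_def by (rule qge_nonneg)
    have \<phi>b: "\<phi> n * x ^ n \<le> C * (\<theta> * x) ^ n" for n
    proof -
      have "\<phi> n \<le> C * \<theta> ^ n" unfolding \<phi>_def using qge_le[of J n] qb[of n] by simp
      then have "\<phi> n * x ^ n \<le> C * \<theta> ^ n * x ^ n" using x by (intro mult_right_mono) auto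
      then show ?thesis by (simp add: power_mult_distrib mult_ac)
    qed
    have gs: "summable (\<lambda>n. C * (\<theta> * x) ^ n)" using x A by (intro summable_mult summable_geometric) (auto simp: mult.commute)
    have sS: "summable (\<lambda>n. \<phi> n * x ^ n)"
      by (rule summable_comparison_test'[OF gs]) (use \<phi>0 \<phi>b x in auto)
    define S where "S = (\<Sum>n. \<phi> n * x ^ n)"
    have Spos: "0 < S"
    proof -
      have "\<phi> J * x ^ J \<le> S" unfolding S_def
        using sum_le_suminf[OF sS, of "{J}"] \<phi>0 x by auto
      moreover have "0 < \<phi> J * x ^ J" unfolding \<phi>_def using qge_path_pos x by simp
      ultimately show ?thesis by simp
    qed
    define T where "T m n = (if m < n then a m * \<phi> (n - 1 - m) * x ^ n else 0)" for m n
    have Tsums: "T m sums (a m * x ^ Suc m * S)" for m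
    proof -
      have "(\<lambda>n. \<phi> n * x ^ n) sums S" unfolding S_def using sS by (rule summable_sums)
      then have "(\<lambda>n. (a m * x ^ Suc m) * (\<phi> n * x ^ n)) sums ((a m * x ^ Suc m) * S)" by (rule sums_mult)
      moreover have "(\<lambda>n. T m (n + Suc m)) = (\<lambda>n. (a m * x ^ Suc m) * (\<phi> n * x ^ n))"
        unfolding T_def by (auto simp: power_add mult_ac)
      ultimately have "(\<lambda>n. T m (n + Suc m)) sums (a m * x ^ Suc m * S)" by simp
      moreover have "(\<Sum>i<Suc m. T m i) = 0" unfolding T_def by simp
      ultimately show ?thesis using sums_iff_shift[of "T m" "Suc m"] by simp
    qed
    have sumT: "(\<lambda>n. \<Sum>m\<le>J. T m n) sums (\<Sum>m\<le>J. a m * x ^ Suc m * S)"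
      by (rule sums_sum) (rule Tsums)
    have le: "(\<Sum>m\<le>J. T m n) \<le> \<phi> n * x ^ n" for n
    proof (cases n)
      case 0 then show ?thesis using \<phi>0 x unfolding T_def by simp
    next
      case (Suc n')
      have "(\<Sum>m\<le>J. T m n) = x ^ n * (\<Sum>m\<in>{..J} \<inter> {..<n}. a m * \<phi> (n - 1 - m))"
        unfolding T_def sum_distrib_left by (subst sum.inter_restrict) (auto intro!: sum.cong simp: mult_ac)
      also have "(\<Sum>m\<in>{..J} \<inter> {..<n}. a m * \<phi> (n - 1 - m)) = (\<Sum>m<n. (if m \<le> J then a m * \<phi> (n - 1 - m) else 0))"
        by (subst Int_commute, subst sum.inter_restrict) auto
      also have "\<dots> \<le> \<phi> n" unfolding \<phi>_def by (rule qge_rec)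
      finally show ?thesis using x by (simp add: mult.commute mult_left_mono)
    qed
    have "(\<Sum>m\<le>J. a m * x ^ Suc m * S) \<le> S"
      using sums_le[OF _ sumT summable_sums[OF sS]] le unfolding S_def by auto
    moreover have "x * (\<Sum>m\<le>J. a m) \<le> (\<Sum>m\<le>J. a m * x ^ Suc m)"
    proof -
      have "x * (\<Sum>m\<le>J. a m) = (\<Sum>m\<le>J. a m * x)" by (simp add: sum_distrib_left mult.commute)
      also have "\<dots> \<le> (\<Sum>m\<le>J. a m * x ^ Suc m)"
      proof (intro sum_mono mult_left_mono a_nonneg)
        fix m
        have "x * 1 \<le> x * x ^ m" using x by (intro mult_left_mono one_le_power) auto
        then show "x \<le> x ^ Suc m" by simp
      qed
      finally show ?thesis .
    qed
    ultimately have "x * (\<Sum>m\<le>J. a m) * S \<le> S"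
    proof -
      assume h1: "(\<Sum>m\<le>J. a m * x ^ Suc m * S) \<le> S"
      assume h2: "x * (\<Sum>m\<le>J. a m) \<le> (\<Sum>m\<le>J. a m * x ^ Suc m)"
      have "x * (\<Sum>m\<le>J. a m) * S \<le> (\<Sum>m\<le>J. a m * x ^ Suc m) * S"
        using h2 Spos by (intro mult_right_mono) auto
      also have "\<dots> = (\<Sum>m\<le>J. a m * x ^ Suc m * S)" by (simp add: sum_distrib_right)
      finally show ?thesis using h1 by simp
    qed
    moreover have "S < x * (\<Sum>m\<le>J. a m) * S" using aJ Spos by simp
    ultimately show False by simp
  qed
  then have "0 < L" using L0 by simp
  then show ?thesis using A by blast
qed

end


fun graft :: "nat \<Rightarrow> (nat \<Rightarrow> ptree) \<Rightarrow> ptree \<Rightarrow> ptree"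
and graftl :: "nat \<Rightarrow> (nat \<Rightarrow> ptree) \<Rightarrow> ptree list \<Rightarrow> ptree list" where
  "graft 0 F t = F 0"
| "graft (Suc n) F (Node ts) = Node (graftl n F ts)"
| "graftl n F [] = []"
| "graftl n F (t # ts) = graft n F t # graftl n (\<lambda>i. F (i + level_count n t)) ts"

lemma length_graftl: "length (graftl n F ts) = length ts"
  by (induction ts arbitrary: F) auto

lemma sum_level0: "sum_list (map (level_count 0) xs) = length xs"
  by (induction xs) auto

lemma level1_graft: "level_count 1 (graft (Suc n) F t) = level_count 1 t"
  by (cases t) (simp add: length_graftl sum_level0)

lemma truncate_graft: "truncate n (graft n F t) = truncate n t"
proof (induction t arbitrary: n F)
  case (Node ts)
  show ?case
  proof (cases n)
    case 0 then show ?thesis by simp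
  next
    case (Suc m)
    have "map (truncate m) (graftl m F ts) = map (truncate m) ts" for F
      using Node.IH by (induction ts arbitrary: F) auto
    then show ?thesis using Suc by simp
  qed
qed

lemma truncate_id: "height t \<le> n \<Longrightarrow> truncate n t = t"
proof (induction t arbitrary: n)
  case (Node ts)
  show ?case
  proof (cases n)
    case 0 then show ?thesis using Node.prems by (cases ts) auto
  next
    case (Suc m)
    have "\<forall>x\<in>set ts. height x \<le> m" using Node.prems Suc height_Node_ge by fastforce
    then have "map (truncate m) ts = ts" using Node.IH by (induction ts) auto
    then show ?thesis using Suc by simp
  qed
qed

lemma sum_lessThan_add: "(\<Sum>i<m + n. f i) = (\<Sum>i<m. f i) + (\<Sum>i<n. f (i + m))" for f :: "nat \<Rightarrow> 'a::comm_monoid_add"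
  by (induction n) (auto simp: add_ac)

lemma edges_graft: "edges (graft n F t) = edges (truncate n t) + (\<Sum>i<level_count n t. edges (F i))"
proof (induction t arbitrary: n F)
  case (Node ts)
  show ?case
  proof (cases n)
    case 0 then show ?thesis by simp
  next
    case (Suc m)
    have "edges (Node (graftl m F ts)) = edges (Node (map (truncate m) ts)) + (\<Sum>i<sum_list (map (level_count m) ts). edges (F i))" for F
      using Node.IH
    proof (induction ts arbitrary: F)
      case Nil then show ?case by simp
    next
      case (Cons t ts)
      have ih1: "edges (graft m F t) = edges (truncate m t) + (\<Sum>i<level_count m t. edges (F i))"
        using Cons.prems by simp
      have ih2: "edges (Node (graftl m (\<lambda>i. F (i + level_count m t)) ts)) =
          edges (Node (map (truncate m) ts)) + (\<Sum>i<sum_list (map (level_count m) ts). edges (F (i + level_count m t)))"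
        using Cons by simp
      show ?case using ih1 ih2 by (simp add: sum_lessThan_add)
    qed
    then show ?thesis using Suc by simp
  qed
qed

lemma height_graft_ge: "i < level_count n t \<Longrightarrow> n + height (F i) \<le> height (graft n F t)"
proof (induction t arbitrary: n F i)
  case (Node ts)
  show ?case
  proof (cases n)
    case 0 then show ?thesis using Node.prems by simp
  next
    case (Suc m)
    have "i < sum_list (map (level_count m) ts) \<Longrightarrow> Suc (m + height (F i)) \<le> height (Node (graftl m F ts))" for F i
      using Node.IH
    proof (induction ts arbitrary: F i)
      case Nil then show ?case by simp
    next
      case (Cons t ts)
      show ?case
      proof (cases "i < level_count m t")
        case True
        then have "m + height (F i) \<le> height (graft m F t)" using Cons.prems(2) by simp
        then show ?thesis by simp
      next
        case False
        have "i - level_count m t < sum_list (map (level_count m) ts)" using Cons.prems(1) False by simp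
        then have "Suc (m + height ((\<lambda>j. F (j + level_count m t)) (i - level_count m t))) \<le> height (Node (graftl m (\<lambda>j. F (j + level_count m t)) ts))"
          using Cons by simp
        then show ?thesis using False by simp
      qed
    qed
    then show ?thesis using Node.prems Suc by simp
  qed
qed

lemma graft_inj: "graft n F t = graft n F' t \<Longrightarrow> i < level_count n t \<Longrightarrow> F i = F' i"
proof (induction t arbitrary: n F F' i)
  case (Node ts)
  show ?case
  proof (cases n)
    case 0 then show ?thesis using Node.prems by simp
  next
    case (Suc m)
    have "graftl m F ts = graftl m F' ts \<Longrightarrow> i < sum_list (map (level_count m) ts) \<Longrightarrow> F i = F' i" for F F' i
      using Node.IH
    proof (induction ts arbitrary: F F' i)
      case Nil then show ?case by simp
    next
      case (Cons t ts)
      have h1: "graft m F t = graft m F' t" and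
           h2: "graftl m (\<lambda>j. F (j + level_count m t)) ts = graftl m (\<lambda>j. F' (j + level_count m t)) ts"
        using Cons.prems(1) by auto
      show ?case
      proof (cases "i < level_count m t")
        case True then show ?thesis using Cons.prems(3)[of t m F F' i] h1 by simp
      next
        case False
        have "i - level_count m t < sum_list (map (level_count m) ts)" using Cons.prems(2) False by simp
        have ih: "F i = F' i" if "x \<in> set ts" "graft n F x = graft n F' x" "i < level_count n x" for x n F F' i
          using Cons.prems(3)[of x n F F' i] that by auto
        have "(\<lambda>j. F (j + level_count m t)) (i - level_count m t) = (\<lambda>j. F' (j + level_count m t)) (i - level_count m t)"
          by (rule Cons.IH[OF h2 \<open>i - level_count m t < _\<close>]) (blast intro: ih)
        then show ?thesis using False by simp
      qed
    qed
    then show ?thesis using Node.prems Suc by simp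
  qed
qed


lemma planted_iff: "planted (Node ts) \<longleftrightarrow> length ts = 1"
  unfolding planted_def by (simp add: sum_level0)

lemma trees_of_size_eq: "1 \<le> N \<Longrightarrow> trees_of_size N = (\<lambda>t. Node [t]) ` Tset (N - 1)"
proof (intro equalityI subsetI)
  fix T assume N: "1 \<le> N" and T: "T \<in> trees_of_size N"
  obtain ts where Tt: "T = Node ts" by (cases T)
  then have "length ts = 1" using T planted_iff unfolding trees_of_size_def by auto
  then obtain t where "ts = [t]" by (cases ts) auto
  then show "T \<in> (\<lambda>t. Node [t]) ` Tset (N - 1)" using T Tt N unfolding trees_of_size_def Tset_def by auto
next
  fix T assume N: "1 \<le> N" and "T \<in> (\<lambda>t. Node [t]) ` Tset (N - 1)"
  then obtain t where "T = Node [t]" "edges t = N - 1" unfolding Tset_def by auto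
  then show "T \<in> trees_of_size N" using N unfolding trees_of_size_def by (simp add: planted_iff)
qed

lemma finite_trees_of_size: "finite (trees_of_size N)"
proof (cases "1 \<le> N")
  case True then show ?thesis using trees_of_size_eq finite_Tset by simp
next
  case False
  have "T \<notin> trees_of_size N" for T
  proof
    assume T: "T \<in> trees_of_size N"
    obtain ts where Tt: "T = Node ts" by (cases T)
    then have "length ts = 1" using T planted_iff unfolding trees_of_size_def by auto
    then obtain t where "ts = [t]" by (cases ts) auto
    then show False using T Tt False unfolding trees_of_size_def by auto
  qed
  then have "trees_of_size N = {}" by blast
  then show ?thesis by simp
qed

lemma level_height_pos: "1 \<le> level_count (height t) t"
proof (induction t)
  case (Node ts)
  show ?case
  proof (cases "ts = []")
    case True then show ?thesis by simp
  next
    case False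
    then obtain x where x: "x \<in> set ts" "height (Node ts) = Suc (height x)" using exists_max_child by blast
    have "1 \<le> level_count (height x) x" using Node.IH x(1) by simp
    also have "\<dots> \<le> sum_list (map (level_count (height x)) ts)"
      using x(1) by (intro member_le_sum_list) auto
    finally show ?thesis using x(2) by simp
  qed
qed

lemma level_le_edges: "level_count (Suc m) t \<le> edges t"
proof (induction t arbitrary: m)
  case (Node ts)
  have "level_count m c \<le> edges c + 1" if "c \<in> set ts" for c
  proof (cases m)
    case 0 then show ?thesis by simp
  next
    case (Suc m') then show ?thesis using Node.IH[OF that, of m'] by simp
  qed
  then have "sum_list (map (level_count m) ts) \<le> sum_list (map (\<lambda>t. edges t + 1) ts)"
    by (intro sum_list_mono) auto
  then show ?case by simp
qed

lemma planted_height: "planted T \<Longrightarrow> 1 \<le> height T"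
proof -
  assume "planted T"
  then obtain ts where T: "T = Node ts" "length ts = 1" using planted_iff by (cases T) auto
  then obtain t where "ts = [t]" by (cases ts) auto
  then show ?thesis using T by simp
qed


context rw
begin

lemma bush_sum:
  "(\<Sum>t\<in>(\<Union>s<M. Tset s). g ^ (edges t + 1)) = (\<Sum>S=1..M. catalan (S - 1) * g ^ S)"
proof -
  have "(\<Sum>t\<in>(\<Union>s<M. Tset s). g ^ (edges t + 1)) = (\<Sum>s<M. \<Sum>t\<in>Tset s. g ^ (edges t + 1))"
    by (rule sum.UNION_disjoint) (auto simp: finite_Tset[unfolded Tset_def] Tset_def)
  also have "\<dots> = (\<Sum>s<M. cc s * g ^ (s + 1))"
    by (intro sum.cong refl) (simp add: Tset_def cc_def cnt_def)
  also have "\<dots> = (\<Sum>S=1..M. catalan (S - 1) * g ^ S)"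
  proof (induction M)
    case 0 then show ?case by simp
  next
    case (Suc M) then show ?case by (simp add: cc_catalan)
  qed
  finally show ?thesis .
qed

lemma comb_bound:
  fixes T0 :: ptree and r K M N :: nat and \<rho> :: real
  assumes T0: "planted T0" and r: "r = height T0" and K: "K = level_count r T0"
    and N: "edges T0 + K * M < N"
    and H: "\<And>n0. N - (edges T0 + K * M) \<le> n0 \<Longrightarrow> \<rho> * q (N - 1) \<le> qge M n0"
  shows "real K * k ^ (r - 1) * g ^ (edges T0 - K) * (\<Sum>S=1..M. catalan (S - 1) * g ^ S) ^ (K - 1) * \<rho> * (k * Qw k (N - 1))
         \<le> (\<Sum>T\<in>trees_of_size N \<inter> ball_tree r T0. k ^ height T)"
proof -
  define E0 where "E0 = edges T0"
  define D where "D = E0 + K * M"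
  have r1: "1 \<le> r" using planted_height[OF T0] r by simp
  then obtain r' where r': "r = Suc r'" by (cases r) auto
  have K1: "1 \<le> K" using level_height_pos[of T0] K r by simp
  have EK: "K \<le> E0" unfolding E0_def K r' using level_le_edges by simp
  define Bush where "Bush = (\<Union>s<M. Tset s)"
  have finB: "finite Bush" unfolding Bush_def using finite_Tset by auto
  have bushE: "edges t < M" if "t \<in> Bush" for t using that unfolding Bush_def Tset_def by auto
  define Idx where "Idx i0 = {..<K} - {i0}" for i0 :: nat
  have cardIdx: "card (Idx i0) = K - 1" if "i0 < K" for i0 unfolding Idx_def using that by simp
  define sG where "sG i0 G = (\<Sum>i\<in>Idx i0. edges (G i))" for i0 G
  define n0 where "n0 i0 G = N - E0 - sG i0 G" for i0 G
  define X where "X i0 G = {x \<in> Tset (n0 i0 G). M \<le> height x}" for i0 G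
  define DD where "DD = (SIGMA i0:{..<K}. SIGMA G:PiE (Idx i0) (\<lambda>_. Bush). X i0 G)"
  define F where "F i0 G x = (\<lambda>i. if i = i0 then x else G i)" for i0 :: nat and G :: "nat \<Rightarrow> ptree" and x
  define \<Psi> where "\<Psi> z = (case z of (i0, G, x) \<Rightarrow> graft r (F i0 G x) T0)" for z
  have sGle: "sG i0 G \<le> K * M" if "i0 < K" "G \<in> PiE (Idx i0) (\<lambda>_. Bush)" for i0 G
  proof -
    have "\<forall>i\<in>Idx i0. edges (G i) \<le> M" using that(2) bushE by (auto simp: PiE_iff intro: less_imp_le)
    then have "sG i0 G \<le> card (Idx i0) * M"
      unfolding sG_def using sum_bounded_above[of "Idx i0" "\<lambda>i. edges (G i)" M] by simp
    also have "\<dots> \<le> K * M" using cardIdx[OF that(1)] by simp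
    finally show ?thesis .
  qed
  have finX: "finite (X i0 G)" for i0 G unfolding X_def using finite_Tset by auto
  have finPi: "finite (PiE (Idx i0) (\<lambda>_. Bush))" for i0
    unfolding Idx_def using finB by (intro finite_PiE) auto
  have finDD: "finite DD" unfolding DD_def using finX finPi by (intro finite_SigmaI) auto
  have trunc0: "truncate r T0 = T0" using truncate_id r by simp
  have lvl1: "level_count 1 T0 = 1" using T0 unfolding planted_def .
  have sumF: "(\<Sum>i<K. edges (F i0 G x i)) = edges x + sG i0 G" if "i0 < K" for i0 G x
  proof -
    have "(\<Sum>i<K. edges (F i0 G x i)) = edges (F i0 G x i0) + (\<Sum>i\<in>{..<K} - {i0}. edges (F i0 G x i))"
      using that by (subst sum.remove[of _ i0]) auto
    also have "(\<Sum>i\<in>{..<K} - {i0}. edges (F i0 G x i)) = sG i0 G"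
      unfolding sG_def Idx_def F_def by (intro sum.cong refl) auto
    finally show ?thesis unfolding F_def by simp
  qed
  have inball: "\<Psi> z \<in> trees_of_size N \<inter> ball_tree r T0" if z: "z \<in> DD" for z
  proof -
    obtain i0 G x where zz: "z = (i0, G, x)" "i0 < K" "G \<in> PiE (Idx i0) (\<lambda>_. Bush)" "x \<in> X i0 G"
      using z unfolding DD_def by auto
    have pl: "planted (\<Psi> z)" unfolding planted_def \<Psi>_def zz(1) r' using level1_graft lvl1 by simp
    have "edges (\<Psi> z) = E0 + (edges x + sG i0 G)"
      unfolding \<Psi>_def zz(1) using edges_graft[of r "F i0 G x" T0] trunc0 sumF[OF zz(2)] K E0_def by simp
    also have "edges x = n0 i0 G" using zz(4) unfolding X_def Tset_def by simp
    also have "E0 + (n0 i0 G + sG i0 G) = N" unfolding n0_def using sGle[OF zz(2,3)] N E0_def by simp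
    finally have ed: "edges (\<Psi> z) = N" .
    have tr: "truncate r (\<Psi> z) = T0" unfolding \<Psi>_def zz(1) using truncate_graft trunc0 by simp
    show ?thesis using pl ed tr unfolding trees_of_size_def ball_tree_def by simp
  qed
  have hgt: "r + height xa \<le> height (\<Psi> (ia, Ga, xa))" if "ia < K" for ia Ga xa
    using height_graft_ge[of ia r T0 "F ia Ga xa"] that K unfolding \<Psi>_def F_def by simp
  have inj: "inj_on \<Psi> DD"
  proof (rule inj_onI)
    fix z z' assume z: "z \<in> DD" and z': "z' \<in> DD" and eq: "\<Psi> z = \<Psi> z'"
    obtain i0 G x where zz: "z = (i0, G, x)" "i0 < K" "G \<in> PiE (Idx i0) (\<lambda>_. Bush)" "x \<in> X i0 G"
      using z unfolding DD_def by auto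
    obtain i0' G' x' where zz': "z' = (i0', G', x')" "i0' < K" "G' \<in> PiE (Idx i0') (\<lambda>_. Bush)" "x' \<in> X i0' G'"
      using z' unfolding DD_def by auto
    have FF: "F i0 G x i = F i0' G' x' i" if "i < K" for i
      using graft_inj[of r "F i0 G x" T0 "F i0' G' x'" i] eq that K unfolding \<Psi>_def zz(1) zz'(1) by simp
    have hx: "M \<le> height x" "M \<le> height x'" using zz(4) zz'(4) unfolding X_def by auto
    have ii: "i0 = i0'"
    proof (rule ccontr)
      assume ne: "i0 \<noteq> i0'"
      have "i0 \<in> Idx i0'" unfolding Idx_def using ne zz(2) by simp
      then have "G' i0 \<in> Bush" using zz'(3) by (auto simp: PiE_iff)
      then have "edges (G' i0) < M" by (rule bushE)
      then have "height (G' i0) < M" using height_le_edges[of "G' i0"] by simp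
      moreover have "F i0 G x i0 = F i0' G' x' i0" using FF zz(2) by simp
      then have "x = G' i0" unfolding F_def using ne by simp
      ultimately show False using hx by simp
    qed
    have xx: "x = x'" using FF[of i0] zz(2) ii unfolding F_def by simp
    have GG: "G = G'"
    proof (rule PiE_ext[OF zz(3)])
      show "G' \<in> PiE (Idx i0) (\<lambda>_. Bush)" using zz'(3) ii by simp
      fix i assume "i \<in> Idx i0"
      then have "i < K" "i \<noteq> i0" unfolding Idx_def by auto
      then show "G i = G' i" using FF[of i] ii unfolding F_def by simp
    qed
    show "z = z'" using zz(1) zz'(1) ii xx GG by simp
  qed
  have kge1: "1 \<le> k" using k1 by simp
  have "(\<Sum>T\<in>trees_of_size N \<inter> ball_tree r T0. k ^ height T) \<ge> (\<Sum>T\<in>\<Psi> ` DD. k ^ height T)"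
    using inball finite_trees_of_size kpos by (intro sum_mono2) auto
  also have "(\<Sum>T\<in>\<Psi> ` DD. k ^ height T) = (\<Sum>z\<in>DD. k ^ height (\<Psi> z))"
    using sum.reindex[OF inj, of "\<lambda>T. k ^ height T"] by (simp add: comp_def)
  also have "(\<Sum>z\<in>DD. k ^ height (\<Psi> z)) \<ge> (\<Sum>z\<in>DD. k ^ (r + height (snd (snd z))))"
  proof (rule sum_mono)
    fix z assume "z \<in> DD"
    then obtain i0 G x where zz: "z = (i0, G, x)" "i0 < K" unfolding DD_def by auto
    show "k ^ (r + height (snd (snd z))) \<le> k ^ height (\<Psi> z)"
      using hgt[where ia=i0 and Ga=G and xa=x, OF zz(2)] kge1 zz(1) by (simp add: power_increasing)
  qed
  also have "(\<Sum>z\<in>DD. k ^ (r + height (snd (snd z))))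
      = (\<Sum>i0<K. \<Sum>G\<in>PiE (Idx i0) (\<lambda>_. Bush). \<Sum>x\<in>X i0 G. k ^ (r + height x))"
    unfolding DD_def using finX finPi by (simp add: sum.Sigma split_def)
  also have "\<dots> \<ge> (\<Sum>i0<K. \<Sum>G\<in>PiE (Idx i0) (\<lambda>_. Bush).
        k ^ r * \<rho> * Qw k (N - 1) * (g ^ (E0 - K) * (\<Prod>i\<in>Idx i0. g ^ (edges (G i) + 1))))"
  proof (intro sum_mono)
    fix i0 G assume i0: "i0 \<in> {..<K}" and G: "G \<in> PiE (Idx i0) (\<lambda>_. Bush)"
    have sg: "sG i0 G \<le> K * M" using sGle i0 G by simp
    have n0ge: "N - D \<le> n0 i0 G" unfolding n0_def D_def using sg by simp
    have n0le: "n0 i0 G \<le> N - 1" unfolding n0_def using EK K1 by simp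
    have h: "\<rho> * q (N - 1) \<le> qge M (n0 i0 G)" using H n0ge unfolding D_def E0_def by simp
    have qg: "qge M (n0 i0 G) = g ^ (n0 i0 G) * (\<Sum>x\<in>X i0 G. k ^ height x)" unfolding qge_def X_def ..
    have ex: "N - 1 = n0 i0 G + ((E0 - K) + (\<Sum>i\<in>Idx i0. edges (G i) + 1))"
    proof -
      have "(\<Sum>i\<in>Idx i0. edges (G i) + 1) = sG i0 G + (K - 1)"
        unfolding sG_def using cardIdx i0 K1 by (simp add: sum_Suc)
      then show ?thesis unfolding n0_def using sg N EK K1 unfolding D_def E0_def by simp
    qed
    have pw: "g ^ (N - 1) = g ^ (n0 i0 G) * (g ^ (E0 - K) * (\<Prod>i\<in>Idx i0. g ^ (edges (G i) + 1)))"
      by (subst ex) (simp add: power_add power_sum)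
    have "\<rho> * Qw k (N - 1) * (g ^ (E0 - K) * (\<Prod>i\<in>Idx i0. g ^ (edges (G i) + 1))) * g ^ (n0 i0 G)
          = \<rho> * q (N - 1)" unfolding q_def pw by (simp add: mult_ac)
    also have "\<dots> \<le> g ^ (n0 i0 G) * (\<Sum>x\<in>X i0 G. k ^ height x)" using h qg by simp
    finally have "\<rho> * Qw k (N - 1) * (g ^ (E0 - K) * (\<Prod>i\<in>Idx i0. g ^ (edges (G i) + 1))) \<le> (\<Sum>x\<in>X i0 G. k ^ height x)"
      using gpos by (simp add: mult.commute[of _ "g ^ n0 i0 G"])
    then have "k ^ r * (\<rho> * Qw k (N - 1) * (g ^ (E0 - K) * (\<Prod>i\<in>Idx i0. g ^ (edges (G i) + 1)))) \<le> k ^ r * (\<Sum>x\<in>X i0 G. k ^ height x)"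
      using kpos by (intro mult_left_mono) auto
    then show "k ^ r * \<rho> * Qw k (N - 1) * (g ^ (E0 - K) * (\<Prod>i\<in>Idx i0. g ^ (edges (G i) + 1)))
        \<le> (\<Sum>x\<in>X i0 G. k ^ (r + height x))"
      by (simp add: power_add sum_distrib_left mult_ac)
  qed
  also have "(\<Sum>i0<K. \<Sum>G\<in>PiE (Idx i0) (\<lambda>_. Bush).
        k ^ r * \<rho> * Qw k (N - 1) * (g ^ (E0 - K) * (\<Prod>i\<in>Idx i0. g ^ (edges (G i) + 1))))
      = (\<Sum>i0<K. k ^ r * \<rho> * Qw k (N - 1) * g ^ (E0 - K) * (\<Sum>t\<in>Bush. g ^ (edges t + 1)) ^ (K - 1))"
  proof (intro sum.cong refl)
    fix i0 assume i0: "i0 \<in> {..<K}"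
    have "(\<Sum>G\<in>PiE (Idx i0) (\<lambda>_. Bush). \<Prod>i\<in>Idx i0. g ^ (edges (G i) + 1))
        = (\<Prod>i\<in>Idx i0. \<Sum>t\<in>Bush. g ^ (edges t + 1))"
      using finB unfolding Idx_def by (subst prod_sum_PiE) auto
    also have "\<dots> = (\<Sum>t\<in>Bush. g ^ (edges t + 1)) ^ (K - 1)" using cardIdx i0 by simp
    finally show "(\<Sum>G\<in>PiE (Idx i0) (\<lambda>_. Bush). k ^ r * \<rho> * Qw k (N - 1) * (g ^ (E0 - K) * (\<Prod>i\<in>Idx i0. g ^ (edges (G i) + 1))))
      = k ^ r * \<rho> * Qw k (N - 1) * g ^ (E0 - K) * (\<Sum>t\<in>Bush. g ^ (edges t + 1)) ^ (K - 1)"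
      by (simp add: sum_distrib_left[symmetric] mult_ac)
  qed
  also have "\<dots> = real K * k ^ (r - 1) * g ^ (edges T0 - K) * (\<Sum>S=1..M. catalan (S - 1) * g ^ S) ^ (K - 1) * \<rho> * (k * Qw k (N - 1))"
    unfolding Bush_def bush_sum E0_def r' by (simp add: mult_ac)
  finally show ?thesis .
qed

end


lemma Zpart_eq:
  assumes "1 \<le> N" "k = exp (- \<mu>)"
  shows "Zpart \<mu> N = k * Qw k (N - 1)"
proof -
  have ex: "exp (- \<mu> * real h) = k ^ h" for h
    using assms(2) exp_of_nat_mult[of h "- \<mu>"] by (simp add: mult.commute)
  have inj: "inj (\<lambda>t. Node [t])" by (rule injI) simp
  have "Zpart \<mu> N = (\<Sum>T\<in>trees_of_size N. k ^ height T)" unfolding Zpart_def ex ..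
  also have "\<dots> = (\<Sum>t\<in>Tset (N - 1). k ^ height (Node [t]))"
    unfolding trees_of_size_eq[OF assms(1)] by (rule sum.reindex[OF inj_on_subset[OF inj], simplified comp_def]) simp
  also have "\<dots> = k * Qw k (N - 1)" unfolding Qw_def by (simp add: sum_distrib_left)
  finally show ?thesis .
qed

lemma nu_eq:
  assumes "k = exp (- \<mu>)"
  shows "nu \<mu> N A = (\<Sum>T\<in>trees_of_size N \<inter> A. k ^ height T) / Zpart \<mu> N"
proof -
  have ex: "exp (- \<mu> * real h) = k ^ h" for h
    using assms exp_of_nat_mult[of h "- \<mu>"] by (simp add: mult.commute)
  show ?thesis unfolding nu_def ex ..
qed

theorem mainTheorem5:
  fixes \<mu> k gc :: real and T0 :: ptree and r K M :: nat
  assumes "\<mu> < 0"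
    and "k = exp (- \<mu>)"
    and "gc = k / (1 + k)^2"
    and "planted T0"
    and "r = height T0"
    and "K = level_count r T0"
  shows "\<exists>d>0. \<exists>f :: nat \<Rightarrow> real. f \<in> O(\<lambda>N. exp (- d * real N)) \<and>
          (\<forall>\<^sub>F N in sequentially.
             nu \<mu> N (ball_tree r T0) \<ge>
               real K * k ^ (r - 1) * gc ^ (edges T0 - K)
               * (\<Sum>S=1..M. catalan (S - 1) * gc ^ S) ^ (K - 1) * (1 + f N))"
proof -
  have k1: "1 < k" using assms(1,2) by simp
  interpret rw k gc using k1 assms(3) by unfold_locales
  obtain L C \<theta> where Q: "0 < L" "0 < \<theta>" "\<theta> < 1" "\<forall>n. \<bar>q n - L\<bar> \<le> C * \<theta> ^ n"
    using q_lim_pos by blast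
  have C0: "0 \<le> C" using Q(4)[rule_format, of 0] by simp
  define l where "l = 4 * gc"
  have l0: "0 < l" "l < 1" unfolding l_def using gpos g4 by auto
  define \<theta>1 where "\<theta>1 = max \<theta> l"
  have th1: "0 < \<theta>1" "\<theta>1 < 1" "\<theta> \<le> \<theta>1" "l \<le> \<theta>1" unfolding \<theta>1_def using Q l0 by auto
  define D where "D = edges T0 + K * M"
  define A where "A = (2 * C + 2 * k ^ M) / \<theta>1 ^ (D + 1)"
  define c where "c = 2 * A / L"
  have A0: "0 \<le> A" unfolding A_def using C0 kpos th1 by simp
  have c0: "0 \<le> c" unfolding c_def using A0 Q by simp
  define f where "f N = - c * \<theta>1 ^ N" for N :: nat
  define d where "d = - ln \<theta>1"
  have d0: "0 < d" unfolding d_def using th1 by simp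
  have fexp: "\<theta>1 ^ N = exp (- d * real N)" for N
  proof -
    have "exp (- d * real N) = exp (real N * ln \<theta>1)" unfolding d_def by (simp add: mult.commute)
    also have "\<dots> = exp (ln \<theta>1) ^ N" by (rule exp_of_nat_mult)
    also have "\<dots> = \<theta>1 ^ N" using th1 by simp
    finally show ?thesis by simp
  qed
  have fO: "f \<in> O(\<lambda>N. exp (- d * real N))"
  proof (rule bigoI[of _ c])
    show "\<forall>\<^sub>F x in at_top. norm (f x) \<le> c * norm (exp (- d * real x))"
    proof (intro always_eventually allI)
      fix x :: nat
      have "norm (f x) = c * \<theta>1 ^ x" unfolding f_def using c0 th1 by (simp add: abs_mult)
      also have "\<dots> = c * norm (exp (- d * real x))" unfolding fexp by simp
      finally show "norm (f x) \<le> c * norm (exp (- d * real x))" by simp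
    qed
  qed
  have lim0: "(\<lambda>n. C * \<theta> ^ n) \<longlonglongrightarrow> 0" using Q by (intro tendsto_mult_right_zero LIMSEQ_power_zero) auto
  then have "\<forall>\<^sub>F n in sequentially. C * \<theta> ^ n < L / 2" using Q(1) by (intro order_tendstoD) auto
  then obtain N1 where N1: "\<forall>n\<ge>N1. C * \<theta> ^ n < L / 2" by (auto simp: eventually_sequentially)
  have pow_le: "x ^ m \<le> x ^ (N - (D + 1))" if "0 < x" "x < 1" "N - (D + 1) \<le> m" for x :: real and m N
    using that by (intro power_decreasing) auto
  have pow_split: "\<theta>1 ^ (N - (D + 1)) = \<theta>1 ^ N / \<theta>1 ^ (D + 1)" if "D + 1 \<le> N" for N
  proof -
    have "N = (N - (D + 1)) + (D + 1)" using that by simp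
    then have "\<theta>1 ^ N = \<theta>1 ^ (N - (D + 1)) * \<theta>1 ^ (D + 1)" by (metis power_add)
    then show ?thesis using th1 by simp
  qed
  have main: "nu \<mu> N (ball_tree r T0) \<ge>
               real K * k ^ (r - 1) * gc ^ (edges T0 - K)
               * (\<Sum>S=1..M. catalan (S - 1) * gc ^ S) ^ (K - 1) * (1 + f N)"
    if N: "N \<ge> N1 + D + 2" for N
  proof -
    have N1': "1 \<le> N" using N by simp
    have qN: "L / 2 \<le> q (N - 1)"
    proof -
      have "C * \<theta> ^ (N - 1) < L / 2" using N1 N by simp
      then show ?thesis using Q(4)[rule_format, of "N - 1"] by simp
    qed
    have KI: "(1 + f N) * q (N - 1) \<le> qge M n0" if n0: "N - D \<le> n0" for n0
    proof -
      have ND: "D + 1 \<le> N" using N by simp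
      have e1: "C * \<theta> ^ (N - 1) \<le> C * (\<theta>1 ^ N / \<theta>1 ^ (D + 1))"
      proof -
        have "\<theta> ^ (N - 1) \<le> \<theta>1 ^ (N - 1)" using Q th1 by (intro power_mono) auto
        also have "\<dots> \<le> \<theta>1 ^ (N - (D + 1))" using th1 by (intro pow_le) auto
        finally show ?thesis using C0 pow_split[OF ND] by (intro mult_left_mono) auto
      qed
      have e2: "C * \<theta> ^ n0 \<le> C * (\<theta>1 ^ N / \<theta>1 ^ (D + 1))"
      proof -
        have "\<theta> ^ n0 \<le> \<theta>1 ^ n0" using Q th1 by (intro power_mono) auto
        also have "\<dots> \<le> \<theta>1 ^ (N - (D + 1))" using th1 n0 by (intro pow_le) auto
        finally show ?thesis using C0 pow_split[OF ND] by (intro mult_left_mono) auto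
      qed
      have e3: "2 * k ^ M * l ^ n0 \<le> 2 * k ^ M * (\<theta>1 ^ N / \<theta>1 ^ (D + 1))"
      proof -
        have "l ^ n0 \<le> \<theta>1 ^ n0" using l0 th1 by (intro power_mono) auto
        also have "\<dots> \<le> \<theta>1 ^ (N - (D + 1))" using th1 n0 by (intro pow_le) auto
        finally show ?thesis using kpos pow_split[OF ND] by (intro mult_left_mono) auto
      qed
      have sumE: "C * \<theta> ^ (N - 1) + C * \<theta> ^ n0 + 2 * k ^ M * l ^ n0 \<le> A * \<theta>1 ^ N"
      proof -
        have "A * \<theta>1 ^ N = C * (\<theta>1 ^ N / \<theta>1 ^ (D + 1)) + C * (\<theta>1 ^ N / \<theta>1 ^ (D + 1)) + 2 * k ^ M * (\<theta>1 ^ N / \<theta>1 ^ (D + 1))"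
          unfolding A_def by (simp add: divide_simps) (simp add: algebra_simps)
        then show ?thesis using e1 e2 e3 by linarith
      qed
      have f1: "qge M n0 \<ge> q n0 - 2 * k ^ M * l ^ n0" using q_qge[of n0 M] unfolding l_def by simp
      have f2: "q n0 \<ge> L - C * \<theta> ^ n0" using Q(4)[rule_format, of n0] by simp
      have f3: "q (N - 1) \<le> L + C * \<theta> ^ (N - 1)" using Q(4)[rule_format, of "N - 1"] by simp
      have f4: "c * \<theta>1 ^ N * (L / 2) \<le> c * \<theta>1 ^ N * q (N - 1)"
        using qN c0 th1 by (intro mult_left_mono) auto
      have f5: "c * \<theta>1 ^ N * (L / 2) = A * \<theta>1 ^ N" unfolding c_def using Q by simp
      have f6: "(1 + f N) * q (N - 1) = q (N - 1) - c * \<theta>1 ^ N * q (N - 1)"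
        unfolding f_def by (simp add: algebra_simps)
      show ?thesis using f1 f2 f3 f4 f5 f6 sumE by linarith
    qed
    have cb: "real K * k ^ (r - 1) * gc ^ (edges T0 - K) * (\<Sum>S=1..M. catalan (S - 1) * gc ^ S) ^ (K - 1) * (1 + f N) * (k * Qw k (N - 1))
         \<le> (\<Sum>T\<in>trees_of_size N \<inter> ball_tree r T0. k ^ height T)"
    proof (rule comb_bound[OF assms(4,5,6)])
      show "edges T0 + K * M < N" using N unfolding D_def by simp
      show "(1 + f N) * q (N - 1) \<le> qge M n0" if "N - (edges T0 + K * M) \<le> n0" for n0
        using KI that unfolding D_def by simp
    qed
    have Zpos: "0 < k * Qw k (N - 1)"
    proof -
      have "0 < q (N - 1)" using qN Q(1) by simp
      then have "0 < Qw k (N - 1)" unfolding q_def using gpos by (simp add: zero_less_mult_iff)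
      then show ?thesis using kpos by simp
    qed
    show ?thesis unfolding nu_eq[OF assms(2)] Zpart_eq[OF N1' assms(2)]
      using cb Zpos by (simp add: pos_le_divide_eq)
  qed
  show ?thesis
    using d0 fO main by (intro exI[of _ d] conjI exI[of _ f]) (auto simp: eventually_sequentially)
qed


end
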